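(* Let $H=-\varepsilon\Delta+V$ on $\ell^2(\mathbb{Z}^d)$ with $V$ a bounded real potential and $0<\varepsilon\leq\varepsilon_0$. There is a constant $C_{d,\varepsilon_0}$ depending only on $d,\varepsilon_0$ such that the following holds. Consider a box $\Lambda_L\subset\Theta\subset\mathbb{Z}^d$ with $L\geq200$, and let $(\varphi,\lambda)$ be an eigenpair for $H_{\Lambda_L}$ (i.e. $\varphi\in\ell^2(\Lambda_L)$, $\|\varphi\|=1$, $H_{\Lambda_L}\varphi=\lambda\varphi$; $\varphi$ is extended by zero to $\Theta$). Then: (i) Given $\widetilde\theta>0$, if $\varphi$ is $(x,\widetilde\theta)$-polynomially localized for some $x\in\Lambda_L^{\Theta,L'}$, then $\operatorname{dist}(\lambda,\sigma(H_\Theta))\leq\|(H_\Theta-\lambda)\varphi\|\leq C_{d,\varepsilon_0}L^{-(\widetilde\theta-\frac{d-1}{2})}$. (ii) Given $\widetilde s\in(0,1)$, if $\varphi$ is $(x,\widetilde s)$-subexponentially localized for some $x\in\Lambda_L^{\Theta,L'}$, then $\operatorname{dist}(\lambda,\sigma(H_\Theta))\leq\|(H_\Theta-\lambda)\varphi\|\leq\mathrm{e}^{-c_1L^{\widetilde s}}$ for some $c_1=c_1(L)\geq1-C_{d,\varepsilon_0}\frac{\log L}{L^{\widetilde s}}$. (iii) Given $m>0$ and $\tau\in(0,1)$, if $\varphi$ is $(x,m)$-localized for some $x\in\Lambda_L^{\Theta,L_\tau}$, then $\operatorname{dist}(\lambda,\sigma(H_\Theta))\leq\|(H_\Theta-\lambda)\varphi\|\leq\mathrm{e}^{-m_1L_\tau}$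 for some $m_1=m_1(L)\geq m-C_{d,\varepsilon_0}\frac{\log L}{L_\tau}$.
   Context: $(\Delta\varphi)(x)=\sum_{|y-x|=1}\varphi(y)$. $\|x\|=\max_j|x_j|$, $\operatorname{dist}(x,\Xi)=\inf_{y\in\Xi}\|y-x\|$. Box: $\Lambda_L=\Lambda_L(a)=\{y\in\mathbb{Z}^d:\|y-a\|\leq L/2\}$ for some $a\in\mathbb{R}^d$. For $\Theta\subset\mathbb{Z}^d$, $H_\Theta=\chi_\Theta H\chi_\Theta$ on $\ell^2(\Theta)$. $L'=\lfloor L/20\rfloor$, $L_\tau=\lfloor L^\tau\rfloor$. For $\Phi\subset\Theta$ and $t\geq1$, $\Phi^{\Theta,t}=\{y\in\Phi:\operatorname{dist}(y,\Theta\setminus\Phi)>\lfloor t\rfloor\}$. For $x\in\Lambda_L$ and normalized $\varphi\in\ell^2(\Lambda_L)$: $\varphi$ is $(x,\widetilde\theta)$-polynomially localized if $|\varphi(y)|\leq L^{-\widetilde\theta}$ for all $y\in\Lambda_L$ with $\|y-x\|\geq L'$; $(x,\widetilde s)$-subexponentially localized if $|\varphi(y)|\leq\mathrm{e}^{-L^{\widetilde s}}$ for all such $y$ with $\|y-x\|\geq L'$; $(x,m)$-localized if $|\varphi(y)|\leq\mathrm{e}^{-m\|y-x\|}$ for all $y\in\Lambda_L$ with $\|y-x\|\geq L_\tau$. *)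

theory Defs
  imports "HOL-Analysis.Analysis"
begin

text \<open>Lattice points of Z^d are functions 'd => int, with 'd a finite index type,
  d = CARD('d). Functions on Z^d are complex-valued.\<close>

type_synonym 'd pt = "'d \<Rightarrow> int"

definition supnorm :: "('d::finite) pt \<Rightarrow> int" where
  "supnorm x = Max (range (\<lambda>j. \<bar>x j\<bar>))"

definition lap :: "(('d::finite) pt \<Rightarrow> complex) \<Rightarrow> 'd pt \<Rightarrow> complex" where
  "lap \<phi> x = (\<Sum>y\<in>{y. (\<Sum>j\<in>UNIV. \<bar>y j - x j\<bar>) = 1}. \<phi> y)"

definition Hop :: "real \<Rightarrow> (('d::finite) pt \<Rightarrow> real) \<Rightarrow> ('d pt \<Rightarrow> complex) \<Rightarrow> 'd pt \<Rightarrow> complex" where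
  "Hop eps V \<phi> x = - complex_of_real eps * lap \<phi> x + complex_of_real (V x) * \<phi> x"

definition restr :: "'a set \<Rightarrow> ('a \<Rightarrow> complex) \<Rightarrow> 'a \<Rightarrow> complex" where
  "restr S f x = (if x \<in> S then f x else 0)"

definition Hrestr :: "real \<Rightarrow> (('d::finite) pt \<Rightarrow> real) \<Rightarrow> 'd pt set \<Rightarrow> ('d pt \<Rightarrow> complex) \<Rightarrow> 'd pt \<Rightarrow> complex" where
  "Hrestr eps V \<Theta> \<phi> = restr \<Theta> (Hop eps V (restr \<Theta> \<phi>))"

definition l2space :: "'a set \<Rightarrow> ('a \<Rightarrow> complex) set" where
  "l2space S = {f. (\<forall>y. y \<notin> S \<longrightarrow> f y = 0) \<and> (\<lambda>y. (cmod (f y))\<^sup>2) summable_on UNIV}"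

definition l2norm :: "('a \<Rightarrow> complex) \<Rightarrow> real" where
  "l2norm f = sqrt (infsum (\<lambda>y. (cmod (f y))\<^sup>2) UNIV)"

text \<open>Spectrum of H_Theta as a bounded operator on l^2(Theta): the set of z such that
  H_Theta - z is not invertible, i.e. not a bijection of l^2(Theta) onto itself
  (bounded inverse is automatic by the open mapping theorem).\<close>
definition spec :: "real \<Rightarrow> (('d::finite) pt \<Rightarrow> real) \<Rightarrow> 'd pt set \<Rightarrow> complex set" where
  "spec eps V \<Theta> = {z. \<not> bij_betw (\<lambda>f y. Hrestr eps V \<Theta> f y - z * f y) (l2space \<Theta>) (l2space \<Theta>)}"

definition box :: "real \<Rightarrow> (('d::finite) \<Rightarrow> real) \<Rightarrow> 'd pt set" where
  "box L a = {y. \<forall>j. \<bar>real_of_int (y j) - a j\<bar> \<le> L / 2}"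

definition Lprime :: "real \<Rightarrow> int" where
  "Lprime L = \<lfloor>L / 20\<rfloor>"

definition Ltau :: "real \<Rightarrow> real \<Rightarrow> int" where
  "Ltau L \<tau> = \<lfloor>L powr \<tau>\<rfloor>"

definition interior_pts :: "('d::finite) pt set \<Rightarrow> 'd pt set \<Rightarrow> real \<Rightarrow> 'd pt set" where
  "interior_pts \<Phi> \<Theta> t = {y \<in> \<Phi>. \<forall>z \<in> \<Theta> - \<Phi>. real_of_int (supnorm (z - y)) > real_of_int \<lfloor>t\<rfloor>}"

definition poly_loc :: "real \<Rightarrow> ('d::finite \<Rightarrow> real) \<Rightarrow> 'd pt \<Rightarrow> real \<Rightarrow> ('d pt \<Rightarrow> complex) \<Rightarrow> bool" where
  "poly_loc L a x \<theta> \<phi> \<longleftrightarrow> (\<forall>y \<in> box L a. supnorm (y - x) \<ge> Lprime L \<longrightarrow> cmod (\<phi> y) \<le> L powr (- \<theta>))"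

definition subexp_loc :: "real \<Rightarrow> ('d::finite \<Rightarrow> real) \<Rightarrow> 'd pt \<Rightarrow> real \<Rightarrow> ('d pt \<Rightarrow> complex) \<Rightarrow> bool" where
  "subexp_loc L a x s \<phi> \<longleftrightarrow> (\<forall>y \<in> box L a. supnorm (y - x) \<ge> Lprime L \<longrightarrow> cmod (\<phi> y) \<le> exp (- (L powr s)))"

definition exp_loc :: "real \<Rightarrow> ('d::finite \<Rightarrow> real) \<Rightarrow> real \<Rightarrow> 'd pt \<Rightarrow> real \<Rightarrow> ('d pt \<Rightarrow> complex) \<Rightarrow> bool" where
  "exp_loc L a \<tau> x m \<phi> \<longleftrightarrow> (\<forall>y \<in> box L a. supnorm (y - x) \<ge> Ltau L \<tau> \<longrightarrow> cmod (\<phi> y) \<le> exp (- m * real_of_int (supnorm (y - x))))"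

end

theory Submission
  imports Defs
begin


definition sqs :: "('a \<Rightarrow> complex) \<Rightarrow> 'a \<Rightarrow> real" where
  "sqs f = (\<lambda>y. (cmod (f y))^2)"

lemma sqs_nonneg: "0 \<le> sqs f y" by (simp add: sqs_def)

lemma sq_add_le: "(cmod (a + b))^2 \<le> 2 * (cmod a)^2 + 2 * (cmod b)^2"
proof -
  have "cmod (a + b) \<le> cmod a + cmod b" by (rule norm_triangle_ineq)
  then have "(cmod (a + b))^2 \<le> (cmod a + cmod b)^2" by (intro power_mono) auto
  also have "\<dots> \<le> 2 * (cmod a)^2 + 2 * (cmod b)^2"
    by (smt (verit, best) sum_squares_bound power2_sum)
  finally show ?thesis .
qed

lemma l2_add: "sqs f summable_on A \<Longrightarrow> sqs g summable_on A \<Longrightarrow> sqs (\<lambda>y. f y + g y) summable_on A"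
proof -
  assume f: "sqs f summable_on A" and g: "sqs g summable_on A"
  have "(\<lambda>y. 2 * sqs f y + 2 * sqs g y) summable_on A"
    using summable_on_add[OF summable_on_cmult_right[OF f] summable_on_cmult_right[OF g]] .
  then show ?thesis
    by (rule summable_on_comparison_test) (auto simp: sqs_def sq_add_le)
qed

lemma l2_scale: "sqs f summable_on A \<Longrightarrow> sqs (\<lambda>y. c * f y) summable_on A"
proof -
  assume f: "sqs f summable_on A"
  have "(\<lambda>y. (cmod c)^2 * sqs f y) summable_on A" by (rule summable_on_cmult_right[OF f])
  then show ?thesis by (simp add: sqs_def norm_mult power_mult_distrib)
qed

lemma l2_uminus: "sqs f summable_on A \<Longrightarrow> sqs (\<lambda>y. - f y) summable_on A"
  by (simp add: sqs_def)

lemma prod_bound: "\<bar>Re (a * cnj b)\<bar> \<le> ((cmod a)^2 + (cmod b)^2) / 2"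
proof -
  have "\<bar>Re (a * cnj b)\<bar> \<le> cmod (a * cnj b)" by (rule abs_Re_le_cmod)
  also have "\<dots> = cmod a * cmod b" by (simp add: norm_mult)
  also have "\<dots> \<le> ((cmod a)^2 + (cmod b)^2) / 2"
    using sum_squares_bound[of "cmod a" "cmod b"] by (simp add: field_simps power2_eq_square)
  finally show ?thesis .
qed

lemma l2_prod_summable:
  assumes "sqs f summable_on A" "sqs g summable_on A"
  shows "(\<lambda>y. Re (f y * cnj (g y))) summable_on A"
proof -
  have "(\<lambda>y. (sqs f y + sqs g y) / 2) summable_on A"
    using summable_on_cmult_left[OF summable_on_add[OF assms], of "1/2"] by (simp add: field_simps)
  then have "(\<lambda>y. norm (Re (f y * cnj (g y)))) summable_on A"
    by (rule summable_on_comparison_test) (unfold sqs_def real_norm_def, rule prod_bound, simp)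
  then show ?thesis using summable_on_iff_abs_summable_on_real by blast
qed

typedef 'a l2 = "{f::'a \<Rightarrow> complex. sqs f summable_on UNIV}"
  morphisms vec mk
  by (rule exI[of _ "\<lambda>_. 0"]) (simp add: sqs_def)

setup_lifting type_definition_l2

lemma vec_sum: "sqs (vec f) summable_on UNIV" using vec[of f] by simp

instantiation l2 :: (type) real_vector
begin
lift_definition zero_l2 :: "'a l2" is "\<lambda>_. 0" by (simp add: sqs_def)
lift_definition plus_l2 :: "'a l2 \<Rightarrow> 'a l2 \<Rightarrow> 'a l2" is "\<lambda>f g y. f y + g y" by (rule l2_add)
lift_definition uminus_l2 :: "'a l2 \<Rightarrow> 'a l2" is "\<lambda>f y. - f y" by (rule l2_uminus)
lift_definition minus_l2 :: "'a l2 \<Rightarrow> 'a l2 \<Rightarrow> 'a l2" is "\<lambda>f g y. f y - g y"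
  unfolding diff_conv_add_uminus by (rule l2_add[OF _ l2_uminus])
lift_definition scaleR_l2 :: "real \<Rightarrow> 'a l2 \<Rightarrow> 'a l2" is "\<lambda>c f y. complex_of_real c * f y" by (rule l2_scale)
instance
proof
  fix a b c :: "'a l2" and r s :: real
  show "a + b + c = a + (b + c)" by transfer (simp add: add.assoc)
  show "a + b = b + a" by transfer (simp add: add.commute)
  show "0 + a = a" by transfer simp
  show "- a + a = 0" by transfer simp
  show "a - b = a + - b" by transfer simp
  show "r *\<^sub>R (a + b) = r *\<^sub>R a + r *\<^sub>R b" by transfer (simp add: distrib_left)
  show "(r + s) *\<^sub>R a = r *\<^sub>R a + s *\<^sub>R a" by transfer (simp add: distrib_right)
  show "r *\<^sub>R s *\<^sub>R a = (r * s) *\<^sub>R a" by transfer (simp add: mult.assoc)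
  show "1 *\<^sub>R a = a" by transfer simp
qed
end

lemma vec_zero[simp]: "vec 0 = (\<lambda>_. 0)" by transfer simp
lemma vec_add[simp]: "vec (f + g) y = vec f y + vec g y" by transfer simp
lemma vec_diff[simp]: "vec (f - g) y = vec f y - vec g y" by transfer simp
lemma vec_uminus[simp]: "vec (- f) y = - vec f y" by transfer simp
lemma vec_scaleR[simp]: "vec (c *\<^sub>R f) y = complex_of_real c * vec f y" by transfer simp

instantiation l2 :: (type) real_inner
begin
definition inner_l2 :: "'a l2 \<Rightarrow> 'a l2 \<Rightarrow> real" where
  "inner_l2 f g = infsum (\<lambda>y. Re (vec f y * cnj (vec g y))) UNIV"
definition norm_l2 :: "'a l2 \<Rightarrow> real" where
  "norm_l2 f = sqrt (infsum (\<lambda>y. (cmod (vec f y))^2) UNIV)"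
definition dist_l2 :: "'a l2 \<Rightarrow> 'a l2 \<Rightarrow> real" where
  "dist_l2 f g = norm (f - g)"
definition sgn_l2 :: "'a l2 \<Rightarrow> 'a l2" where
  "sgn_l2 f = f /\<^sub>R norm f"
definition uniformity_l2 :: "('a l2 \<times> 'a l2) filter" where
  "uniformity_l2 = (INF e\<in>{0<..}. principal {(x, y). dist x y < e})"
definition open_l2 :: "'a l2 set \<Rightarrow> bool" where
  "open_l2 U = (\<forall>x\<in>U. \<forall>\<^sub>F (x', y) in uniformity. x' = x \<longrightarrow> y \<in> U)"
lemma ps: "(\<lambda>y. Re (vec f y * cnj (vec g y))) summable_on UNIV" for f g :: "'a l2"
  by (rule l2_prod_summable[OF vec_sum vec_sum])
lemma self_inner: "Re (a * cnj a) = (cmod a)^2"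
  using complex_norm_square[of a] by (metis Re_complex_of_real)
instance
proof
  fix x y z :: "'a l2" and r :: real
  show "dist x y = norm (x - y)" by (simp add: dist_l2_def)
  show "sgn x = x /\<^sub>R norm x" by (simp add: sgn_l2_def)
  show "uniformity = (INF e\<in>{0<..}. principal {(x, y::'a l2). dist x y < e})" by (simp add: uniformity_l2_def)
  show "open U = (\<forall>x\<in>U. \<forall>\<^sub>F (x', y) in uniformity. x' = x \<longrightarrow> y \<in> U)" for U :: "'a l2 set"
    by (simp add: open_l2_def)
  show "inner x y = inner y x" unfolding inner_l2_def
    by (rule infsum_cong) (simp add: mult.commute)
  show "inner (x + y) z = inner x z + inner y z" unfolding inner_l2_def
    by (subst infsum_add[OF ps ps, symmetric]) (simp add: distrib_right)
  show "inner (r *\<^sub>R x) y = r * inner x y" unfolding inner_l2_def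
    by (subst infsum_cmult_right[symmetric]) (rule ps, simp add: mult.assoc)
  have ii: "inner x x = infsum (\<lambda>y. (cmod (vec x y))^2) UNIV"
    unfolding inner_l2_def by (rule infsum_cong) (rule self_inner)
  show "0 \<le> inner x x" unfolding ii by (rule infsum_nonneg) simp
  show "(inner x x = 0) = (x = 0)"
  proof
    assume h: "inner x x = 0"
    have "sqs (vec x) y = 0" for y
      by (rule nonneg_infsum_le_0D[OF _ vec_sum]) (use h ii in \<open>auto simp: sqs_def\<close>)
    then have "vec x = vec 0" by (auto simp: sqs_def)
    then show "x = 0" using vec_inject by blast
  qed (simp add: inner_l2_def)
  show "norm x = sqrt (inner x x)" unfolding ii norm_l2_def ..
qed
end

lemma norm_l2_sq: "(norm f)^2 = infsum (\<lambda>y. (cmod (vec f y))^2) UNIV"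
  unfolding norm_l2_def by (rule real_sqrt_pow2) (rule infsum_nonneg, simp)

lemma sum_le_norm: "finite F \<Longrightarrow> (\<Sum>y\<in>F. (cmod (vec f y))^2) \<le> (norm f)^2"
  unfolding norm_l2_sq using vec_sum[of f] unfolding sqs_def
  by (intro finite_sum_le_infsum) auto

lemma vec_le_norm: "cmod (vec f y) \<le> norm f"
proof -
  have "(cmod (vec f y))^2 \<le> (norm f)^2" using sum_le_norm[of "{y}" f] by simp
  then show ?thesis using power2_le_iff_abs_le[OF norm_ge_zero[of f]] by simp
qed

instance l2 :: (type) complete_space
proof
  fix X :: "nat \<Rightarrow> 'a l2" assume "Cauchy X"
  then have C: "\<forall>e>0. \<exists>N. \<forall>m\<ge>N. \<forall>n\<ge>N. norm (X m - X n) < e" by (simp add: Cauchy_iff)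
  have pc: "Cauchy (\<lambda>n. vec (X n) y)" for y
    unfolding Cauchy_iff
  proof (intro allI impI)
    fix e :: real assume "e > 0"
    then obtain N where N: "\<forall>m\<ge>N. \<forall>n\<ge>N. norm (X m - X n) < e" using C by blast
    show "\<exists>M. \<forall>m\<ge>M. \<forall>n\<ge>M. norm (vec (X m) y - vec (X n) y) < e"
    proof (intro exI allI impI)
      fix m n assume "m \<ge> N" "n \<ge> N"
      have "norm (vec (X m) y - vec (X n) y) = cmod (vec (X m - X n) y)" by simp
      also have "\<dots> \<le> norm (X m - X n)" by (rule vec_le_norm)
      also have "\<dots> < e" using N \<open>m \<ge> N\<close> \<open>n \<ge> N\<close> by blast
      finally show "norm (vec (X m) y - vec (X n) y) < e" .
    qed
  qed
  define g where "g y = lim (\<lambda>n. vec (X n) y)" for y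
  have gl: "(\<lambda>n. vec (X n) y) \<longlonglongrightarrow> g y" for y
    unfolding g_def using pc[of y] Cauchy_convergent_iff convergent_LIMSEQ_iff by blast
  have main: "\<exists>N. \<forall>n\<ge>N. sqs (\<lambda>y. vec (X n) y - g y) summable_on UNIV \<and>
      infsum (sqs (\<lambda>y. vec (X n) y - g y)) UNIV \<le> e^2" if "e > 0" for e
  proof -
    obtain N where N: "\<forall>m\<ge>N. \<forall>n\<ge>N. norm (X m - X n) < e" using C \<open>e > 0\<close> by blast
    have fin: "sum (sqs (\<lambda>y. vec (X n) y - g y)) F \<le> e^2" if "n \<ge> N" "finite F" for n F
    proof -
      have lim: "(\<lambda>m. \<Sum>y\<in>F. (cmod (vec (X n) y - vec (X m) y))^2) \<longlonglongrightarrow>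
          (\<Sum>y\<in>F. (cmod (vec (X n) y - g y))^2)"
        by (intro tendsto_sum tendsto_power tendsto_norm tendsto_diff tendsto_const gl)
      have "\<forall>m\<ge>N. (\<Sum>y\<in>F. (cmod (vec (X n) y - vec (X m) y))^2) \<le> e^2"
      proof (intro allI impI)
        fix m assume "m \<ge> N"
        have "(\<Sum>y\<in>F. (cmod (vec (X n) y - vec (X m) y))^2) = (\<Sum>y\<in>F. (cmod (vec (X n - X m) y))^2)"
          by simp
        also have "\<dots> \<le> (norm (X n - X m))^2" by (rule sum_le_norm[OF that(2)])
        also have "\<dots> \<le> e^2" using N \<open>m \<ge> N\<close> that(1) by (intro power_mono) (auto intro: less_imp_le)
        finally show "(\<Sum>y\<in>F. (cmod (vec (X n) y - vec (X m) y))^2) \<le> e^2" .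
      qed
      then have "(\<Sum>y\<in>F. (cmod (vec (X n) y - g y))^2) \<le> e^2"
        by (intro Lim_bounded[OF lim]) blast
      then show ?thesis by (simp add: sqs_def)
    qed
    have "sqs (\<lambda>y. vec (X n) y - g y) summable_on UNIV \<and>
      infsum (sqs (\<lambda>y. vec (X n) y - g y)) UNIV \<le> e^2" if "n \<ge> N" for n
    proof
      show sm: "sqs (\<lambda>y. vec (X n) y - g y) summable_on UNIV"
        by (rule nonneg_bdd_above_summable_on) (auto simp: sqs_nonneg intro!: bdd_aboveI[of _ "e^2"] fin[OF that])
      show "infsum (sqs (\<lambda>y. vec (X n) y - g y)) UNIV \<le> e^2"
        by (rule infsum_le_finite_sums[OF sm]) (rule fin[OF that], auto)
    qed
    then show ?thesis by blast
  qed
  obtain N1 where N1: "sqs (\<lambda>y. vec (X N1) y - g y) summable_on UNIV"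
    using main[of 1] by auto
  have gsum: "sqs g summable_on UNIV"
  proof -
    have "sqs (\<lambda>y. vec (X N1) y + - (vec (X N1) y - g y)) summable_on UNIV"
      by (rule l2_add[OF vec_sum l2_uminus[OF N1]])
    then show ?thesis by simp
  qed
  define G where "G = mk g"
  have vG: "vec G = g" unfolding G_def using gsum by (simp add: mk_inverse)
  have "X \<longlonglongrightarrow> G"
  proof (rule LIMSEQ_I)
    fix r :: real assume "r > 0"
    then obtain N where N: "\<forall>n\<ge>N. infsum (sqs (\<lambda>y. vec (X n) y - g y)) UNIV \<le> (r/2)^2"
      using main[of "r/2"] by auto
    show "\<exists>N. \<forall>n\<ge>N. norm (X n - G) < r"
    proof (intro exI allI impI)
      fix n assume "n \<ge> N"
      have "(norm (X n - G))^2 = infsum (sqs (\<lambda>y. vec (X n) y - g y)) UNIV"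
        unfolding norm_l2_sq sqs_def by (simp add: vG)
      also have "\<dots> \<le> (r/2)^2" using N \<open>n \<ge> N\<close> by blast
      finally have "norm (X n - G) \<le> r/2"
        using \<open>r > 0\<close> power2_le_iff_abs_le[of "r/2" "norm (X n - G)"] by simp
      then show "norm (X n - G) < r" using \<open>r > 0\<close> by simp
    qed
  qed
  then show "convergent X" unfolding convergent_def by blast
qed

instance l2 :: (type) banach ..


primrec bld :: "(nat \<Rightarrow> 'a list \<Rightarrow> 'a) \<Rightarrow> nat \<Rightarrow> 'a list" where
  "bld g 0 = []" | "bld g (Suc k) = bld g k @ [g k (bld g k)]"

lemma set_bld: "set (bld g k) = (\<lambda>j. g j (bld g j)) ` {..<k}"
  by (induction k) (auto simp: lessThan_Suc)

lemma not_surj: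
  fixes S :: "'a::{real_inner,banach} \<Rightarrow> 'a" and X :: "'a set"
  assumes cl: "closed X" and sub: "subspace X"
    and SX: "\<And>u. u \<in> X \<Longrightarrow> S u \<in> X"
    and sym: "\<And>u v. u \<in> X \<Longrightarrow> v \<in> X \<Longrightarrow> inner (S u) v = inner u (S v)"
    and small: "\<And>e. e > 0 \<Longrightarrow> \<exists>x\<in>X. norm x = 1 \<and> norm (S x) \<le> e"
  shows "\<not> X \<subseteq> S ` X"
proof
  assume surj: "X \<subseteq> S ` X"
  have K: "\<exists>K\<ge>0. \<forall>x\<in>X. \<bar>inner y x\<bar> \<le> K * norm (S x)" if "y \<in> X" for y
  proof -
    obtain z where z: "z \<in> X" "y = S z" using surj \<open>y \<in> X\<close> by blast
    show ?thesis
    proof (rule exI[of _ "norm z"], intro conjI ballI)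
      fix x assume "x \<in> X"
      then have "inner y x = inner z (S x)" using z sym[of z x] by simp
      then show "\<bar>inner y x\<bar> \<le> norm z * norm (S x)" by (simp add: Cauchy_Schwarz_ineq2)
    qed simp
  qed
  define good where "good k ys x \<longleftrightarrow> x\<in>X \<and> norm x = 1 \<and> norm (S x) \<le> (1/8)^k \<and>
      (\<forall>y\<in>set ys. \<bar>inner y x\<bar> \<le> (1/2)^k / 8)" for k :: nat and ys :: "'a list" and x
  have step: "\<exists>x. good k ys x" if "set ys \<subseteq> X" for ys :: "'a list" and k :: nat
  proof -
    have "\<forall>y\<in>set ys. \<exists>K\<ge>0. \<forall>x\<in>X. \<bar>inner y x\<bar> \<le> K * norm (S x)" using K that by blast
    then obtain Kf where Kf: "\<forall>y\<in>set ys. Kf y \<ge> 0 \<and> (\<forall>x\<in>X. \<bar>inner y x\<bar> \<le> Kf y * norm (S x))"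
      by (rule bchoice[THEN exE]) (auto intro: that)
    define K0 where "K0 = 1 + sum Kf (set ys)"
    have Kle: "Kf y \<le> K0" if "y \<in> set ys" for y
    proof -
      have "Kf y \<le> sum Kf (set ys)" by (rule member_le_sum) (use Kf that in auto)
      then show ?thesis unfolding K0_def by simp
    qed
    have K0pos: "K0 > 0" unfolding K0_def using Kf by (simp add: add_pos_nonneg sum_nonneg)
    define e where "e = min ((1/8)^k) ((1/2)^k / 8 / K0)"
    have "e > 0" unfolding e_def using K0pos by simp
    have e1: "e \<le> (1/8)^k" and e2: "e \<le> (1/2)^k / 8 / K0" unfolding e_def by simp_all
    obtain x where x: "x\<in>X" "norm x = 1" "norm (S x) \<le> e" using small \<open>e > 0\<close> by blast
    have "\<bar>inner y x\<bar> \<le> (1/2)^k / 8" if "y \<in> set ys" for y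
    proof -
      have "\<bar>inner y x\<bar> \<le> Kf y * norm (S x)" using Kf that x by blast
      also have "\<dots> \<le> K0 * e"
        by (rule mult_mono[OF Kle[OF that] x(3)]) (use Kf that K0pos in auto)
      also have "\<dots> \<le> K0 * ((1/2)^k / 8 / K0)"
        by (rule mult_left_mono[OF e2]) (use K0pos in simp)
      also have "\<dots> = (1/2)^k / 8" using K0pos by simp
      finally show ?thesis .
    qed
    then show ?thesis unfolding good_def using x e1 by (intro exI[of _ x]) simp
  qed
  define g where "g k l = (SOME x. good k l x)" for k l
  have inv: "set (bld g k) \<subseteq> X \<and> good k (bld g k) (g k (bld g k))" for k
  proof (induction k rule: less_induct)
    case (less k)
    have "set (bld g k) \<subseteq> X" unfolding set_bld using less unfolding good_def by auto
    moreover then have "good k (bld g k) (g k (bld g k))" unfolding g_def using step by (metis someI_ex)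
    ultimately show ?case by blast
  qed
  define x where "x k = g k (bld g k)" for k
  have xX: "x k \<in> X" and xn: "norm (x k) = 1" and xS: "norm (S (x k)) \<le> (1/8)^k" for k
    using inv[of k] unfolding good_def x_def by auto
  have xo: "\<bar>inner (x j) (x k)\<bar> \<le> (1/2)^k / 8" if "j < k" for j k
  proof -
    have "x j \<in> set (bld g k)" unfolding set_bld x_def using that by auto
    then show ?thesis using inv[of k] unfolding good_def x_def by auto
  qed
  have xo2: "\<bar>inner (x j) (x k)\<bar> \<le> (1/2)^k / 8" if "j \<noteq> k" for j k
  proof (cases "j < k")
    case True then show ?thesis using xo by simp
  next
    case False
    then have "k < j" using that by simp
    then have "\<bar>inner (x k) (x j)\<bar> \<le> (1/2)^j / 8" using xo by simp
    moreover have "(1/2::real)^j \<le> (1/2)^k" using \<open>k<j\<close> by (simp add: power_decreasing)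
    moreover have "inner (x j) (x k) = inner (x k) (x j)" by (rule inner_commute)
    ultimately show ?thesis by linarith
  qed
  define c where "c j = ((1/2::real)^j) *\<^sub>R x j" for j
  have nc: "norm (c j) = (1/2)^j" for j unfolding c_def using xn by simp
  have sumc: "summable c"
    by (rule summable_norm_cancel) (simp add: nc summable_geometric)
  define y where "y = suminf c"
  have "(\<lambda>n. sum c {..<n}) \<longlonglongrightarrow> y" unfolding y_def using summable_LIMSEQ[OF sumc] .
  moreover have "sum c {..<n} \<in> X" for n
    unfolding c_def by (rule real_vector.subspace_sum[OF sub]) (rule real_vector.subspace_scale[OF sub xX])
  ultimately have yX: "y \<in> X" by (rule closed_sequentially[OF cl, rotated])
  obtain Ky where Ky: "Ky \<ge> 0" "\<forall>x\<in>X. \<bar>inner y x\<bar> \<le> Ky * norm (S x)" using K[OF yX] by (elim exE conjE)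
  have low: "\<bar>inner y (x k)\<bar> \<ge> (3/4) * (1/2)^k" for k
  proof -
    have cs: "c sums y" using sumc y_def summable_sums by blast
    have s1: "(\<lambda>j. inner (c j) (x k)) sums inner y (x k)"
      using bounded_linear.sums[OF bounded_linear_inner_left cs] .
    define d where "d j = inner (c j) (x k) - (if j = k then (1/2)^k else 0)" for j
    have ds: "d sums (inner y (x k) - (1/2)^k)" unfolding d_def
      using sums_diff[OF s1 sums_single[of k "\<lambda>_. (1/2::real)^k"]] by simp
    have db: "\<bar>d j\<bar> \<le> (1/2)^j * ((1/2)^k / 8)" for j
    proof (cases "j = k")
      case True then show ?thesis unfolding d_def c_def using xn by (simp add: power2_norm_eq_inner[symmetric])
    next
      case False
      have "\<bar>d j\<bar> = (1/2)^j * \<bar>inner (x j) (x k)\<bar>" unfolding d_def c_def using False by (simp add: abs_mult)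
      then show ?thesis using xo2[OF False] by (simp add: mult_left_mono)
    qed
    have gs: "(\<lambda>j. (1/2::real)^j * ((1/2)^k / 8)) sums (2 * ((1/2)^k / 8))"
      using sums_mult2[OF geometric_sums[of "1/2::real"], of "(1/2)^k / 8"] by simp
    have "inner y (x k) - (1/2)^k \<le> 2 * ((1/2)^k / 8)"
      by (rule sums_le[OF _ ds gs]) (use db in \<open>metis abs_le_iff\<close>)
    moreover have "- (2 * ((1/2)^k / 8)) \<le> inner y (x k) - (1/2)^k"
      by (rule sums_le[OF _ sums_minus[OF gs] ds]) (use db in \<open>metis abs_le_iff minus_le_iff\<close>)
    ultimately show ?thesis by simp
  qed
  obtain k where k: "Ky * (4/3) < 4 ^ k" using real_arch_pow[of "4::real" "Ky * (4/3)"] by auto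
  have "(3/4) * (1/2::real)^k \<le> Ky * (1/8)^k"
  proof -
    have "\<bar>inner y (x k)\<bar> \<le> Ky * norm (S (x k))" using Ky(2) xX[of k] by blast
    also have "\<dots> \<le> Ky * (1/8)^k" using xS[of k] Ky(1) by (rule mult_left_mono)
    finally show ?thesis using low[of k] by linarith
  qed
  moreover have "(1/2::real)^k = 4^k * (1/8)^k" by (simp add: power_mult_distrib[symmetric])
  ultimately have "(3/4) * 4^k * (1/8::real)^k \<le> Ky * (1/8)^k" by simp
  then have "(3/4) * 4^k \<le> Ky" by simp
  then show False using k by simp
qed


lemma quad_disc:
  fixes a b c :: real
  assumes "\<And>t. 0 \<le> a + 2*b*t + c*t^2"
  shows "b^2 \<le> a*c"
proof (cases "c = 0")
  case True
  have "b = 0"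
  proof (rule ccontr)
    assume "b \<noteq> 0"
    have "0 \<le> a + 2*b*(-(a+1)/(2*b)) + c*(-(a+1)/(2*b))^2" by (rule assms)
    also have "\<dots> = -1" using True \<open>b\<noteq>0\<close> by (simp add: field_simps)
    finally show False by simp
  qed
  then show ?thesis using True by simp
next
  case False
  have c0: "c \<ge> 0"
  proof (rule ccontr)
    assume "\<not> c \<ge> 0"
    then have cn: "c < 0" by simp
    define t where "t = (\<bar>a\<bar> + 2*\<bar>b\<bar> + 1) / (- c) + 1"
    have t1: "t \<ge> 1" unfolding t_def using cn by (simp add: divide_nonneg_neg)
    have "c * t^2 \<le> c * t" using cn t1 by (simp add: power2_eq_square mult_le_cancel_left_neg) 
    have "c * t = -(\<bar>a\<bar> + 2*\<bar>b\<bar> + 1) + c" unfolding t_def using cn by (simp add: field_simps)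
    have "0 \<le> a + 2*b*t + c*t^2" by (rule assms)
    moreover have "2*b*t \<le> 2*\<bar>b\<bar>*t" using t1 by (intro mult_right_mono) auto
    moreover have "a \<le> \<bar>a\<bar> * t" using t1 by (smt (verit) mult_left_mono mult.commute mult_cancel_left1)
    moreover have "c * t^2 = (c*t) * t" by (simp add: power2_eq_square)
    moreover have "(\<bar>a\<bar> + 2*\<bar>b\<bar> + c*t) * t \<le> (-1) * t"
      using t1 \<open>c * t = _\<close> cn by (intro mult_right_mono) auto
    then have "\<bar>a\<bar>*t + 2*\<bar>b\<bar>*t + (c*t)*t \<le> - t" by (simp add: algebra_simps)
    ultimately show False using t1 by linarith
  qed
  then have cp: "c > 0" using False by simp
  have "0 \<le> a + 2*b*(-b/c) + c*(-b/c)^2" by (rule assms)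
  also have "\<dots> = a - b^2/c" using cp by (simp add: field_simps power2_eq_square)
  finally have "b^2 / c \<le> a" by simp
  then show ?thesis using cp by (simp add: field_simps mult.commute)
qed


lemma spec_pt:
  fixes T :: "'a::{real_inner,banach} \<Rightarrow> 'a" and X :: "'a set"
  assumes cl: "closed X" and sub: "subspace X"
    and TX: "\<And>u. u \<in> X \<Longrightarrow> T u \<in> X"
    and lin: "linear T"
    and sym: "\<And>u v. u \<in> X \<Longrightarrow> v \<in> X \<Longrightarrow> inner (T u) v = inner u (T v)"
    and bnd: "\<And>u. norm (T u) \<le> M * norm u"
    and phX: "\<phi> \<in> X" and phn: "norm \<phi> = 1"
  shows "\<exists>\<sigma>. \<bar>\<sigma>\<bar> \<le> norm (T \<phi>) \<and> \<not> X \<subseteq> (\<lambda>u. T u - \<sigma> *\<^sub>R u) ` X"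
proof -
  define N where "N = {norm (T u) | u. u \<in> X \<and> norm u = 1}"
  define \<kappa> where "\<kappa> = Inf N"
  have Nne: "N \<noteq> {}" unfolding N_def using phX phn by blast
  have Nbd: "bdd_below N" unfolding N_def by (rule bdd_belowI[of _ 0]) auto
  have k1: "\<kappa> \<le> norm (T \<phi>)" unfolding \<kappa>_def by (rule cInf_lower[OF _ Nbd]) (use phX phn N_def in blast)
  have k0: "\<kappa> \<ge> 0" unfolding \<kappa>_def by (rule cInf_greatest[OF Nne]) (auto simp: N_def)
  have kl: "\<kappa> \<le> norm (T u)" if "u \<in> X" "norm u = 1" for u
    unfolding \<kappa>_def by (rule cInf_lower[OF _ Nbd]) (use that N_def in blast)
  have lowb: "\<kappa> * norm u \<le> norm (T u)" if "u \<in> X" for u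
  proof (cases "u = 0")
    case True then show ?thesis using linear_0[OF lin] by simp
  next
    case False
    define u' where "u' = (1 / norm u) *\<^sub>R u"
    have "u' \<in> X" unfolding u'_def using that sub by (simp add: real_vector.subspace_scale)
    moreover have "norm u' = 1" unfolding u'_def using False by simp
    ultimately have "\<kappa> \<le> norm (T u')" by (rule kl)
    also have "norm (T u') = norm (T u) / norm u" unfolding u'_def using linear_scale[OF lin] by simp
    finally show ?thesis using False by (simp add: field_simps)
  qed
  have approx: "\<exists>u\<in>X. norm u = 1 \<and> norm (T u) < \<kappa> + t" if "t > 0" for t
  proof -
    have "Inf N < \<kappa> + t" using that \<kappa>_def by simp
    then obtain n where "n \<in> N" "n < \<kappa> + t" using cInf_lessD[OF Nne] by blast
    then show ?thesis unfolding N_def by blast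
  qed
  have "norm (T \<phi>) \<le> M" using bnd[of \<phi>] phn by simp
  then have M0: "M \<ge> 0" using norm_ge_zero[of "T \<phi>"] by linarith
  define M' where "M' = M + 1"
  have M'p: "M' > 0" unfolding M'_def using M0 by simp
  have bnd': "norm (T u) \<le> M' * norm u" for u
    using bnd[of u] norm_ge_zero[of u] unfolding M'_def distrib_right by linarith
  have Tadd: "T (u + v) = T u + T v" and Tsc: "T (c *\<^sub>R u) = c *\<^sub>R T u"
    and Tdiff: "T (u - v) = T u - T v" for u v c
    using linear_add[OF lin] linear_scale[OF lin] linear_diff[OF lin] by auto
  have key: "\<exists>\<sigma>\<in>{\<kappa>, -\<kappa>}. \<exists>x\<in>X. norm x = 1 \<and> norm (T x - \<sigma> *\<^sub>R x) \<le> e" if "e > 0" for e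
  proof (cases "\<kappa> = 0")
    case True
    obtain u where "u \<in> X" "norm u = 1" "norm (T u) < \<kappa> + e" using approx[OF \<open>e > 0\<close>] by blast
    then have "norm (T u - \<kappa> *\<^sub>R u) \<le> e" using True by simp
    then show ?thesis using \<open>u \<in> X\<close> \<open>norm u = 1\<close> by blast
  next
    case False
    then have kp: "\<kappa> > 0" using k0 by simp
    define \<delta>0 where "\<delta>0 = (e * \<kappa> / M')^2"
    have d0: "\<delta>0 > 0" unfolding \<delta>0_def using kp that M'p by simp
    define t where "t = min \<kappa> (\<delta>0 / (3 * \<kappa>))"
    have tp: "t > 0" unfolding t_def using kp d0 by simp
    obtain \<psi> where ps: "\<psi> \<in> X" "norm \<psi> = 1" "norm (T \<psi>) < \<kappa> + t" using approx[OF tp] by blast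
    define D where "D u v = inner (T u) (T v) - \<kappa>^2 * inner u v" for u v
    define P where "P u = T (T u) - \<kappa>^2 *\<^sub>R u" for u
    have PX: "P u \<in> X" if "u \<in> X" for u
      unfolding P_def using that TX sub by (intro real_vector.subspace_diff real_vector.subspace_scale) auto
    have Dpsd: "D u u \<ge> 0" if "u \<in> X" for u
    proof -
      have "(\<kappa> * norm u)^2 \<le> (norm (T u))^2" using lowb[OF that] k0 by (intro power_mono) auto
      then show ?thesis unfolding D_def by (simp add: power2_norm_eq_inner[symmetric] power_mult_distrib)
    qed
    have DP: "D u v = inner (P u) v" if "u \<in> X" "v \<in> X" for u v
      unfolding D_def P_def using sym[OF TX[OF that(1)] that(2)] by (simp add: inner_diff_left)
    have Dsym: "D u v = D v u" for u v unfolding D_def by (simp add: inner_commute)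
    have CS: "(D u v)^2 \<le> D u u * D v v" if "u \<in> X" "v \<in> X" for u v
    proof (rule quad_disc)
      fix s :: real
      have "u + s *\<^sub>R v \<in> X" using that sub by (intro real_vector.subspace_add real_vector.subspace_scale) auto
      then have "0 \<le> D (u + s *\<^sub>R v) (u + s *\<^sub>R v)" by (rule Dpsd)
      also have "D (u + s *\<^sub>R v) (u + s *\<^sub>R v) = D u u + 2 * D u v * s + D v v * s^2"
        unfolding D_def Tadd Tsc by (simp add: inner_add_left inner_add_right inner_commute algebra_simps power2_eq_square)
      finally show "0 \<le> D u u + 2 * D u v * s + D v v * s^2" .
    qed
    define p where "p = P \<psi>"
    have pX: "p \<in> X" unfolding p_def using PX ps(1) .
    have np2: "(norm p)^2 = D \<psi> p" using DP[OF ps(1) pX] unfolding p_def by (simp add: power2_norm_eq_inner)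
    have Dpp: "D p p \<le> M'^2 * (norm p)^2"
    proof -
      have "D p p \<le> (norm (T p))^2" unfolding D_def using k0
        by (simp add: power2_norm_eq_inner[symmetric])
      also have "\<dots> \<le> (M' * norm p)^2" using bnd'[of p] by (intro power_mono) auto
      finally show ?thesis by (simp add: power_mult_distrib)
    qed
    have Dpsi: "D \<psi> \<psi> \<le> \<delta>0"
    proof -
      have "D \<psi> \<psi> = (norm (T \<psi>))^2 - \<kappa>^2" unfolding D_def using ps(2)
        by (simp add: power2_norm_eq_inner[symmetric])
      also have "\<dots> \<le> (\<kappa> + t)^2 - \<kappa>^2" using ps(3) by (intro diff_right_mono power_mono) auto
      also have "\<dots> = t * (2*\<kappa> + t)" by (simp add: power2_eq_square algebra_simps)
      also have "\<dots> \<le> t * (3 * \<kappa>)" using tp unfolding t_def by (intro mult_left_mono) auto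
      also have "\<dots> \<le> (\<delta>0 / (3 * \<kappa>)) * (3 * \<kappa>)" using kp unfolding t_def by (intro mult_right_mono) auto
      also have "\<dots> = \<delta>0" using kp by simp
      finally show ?thesis .
    qed
    have "((norm p)^2)^2 \<le> D \<psi> \<psi> * D p p" using CS[OF ps(1) pX] np2 by simp
    also have "\<dots> \<le> \<delta>0 * (M'^2 * (norm p)^2)"
      using Dpsi Dpp Dpsd[OF ps(1)] Dpsd[OF pX] d0 by (intro mult_mono) auto
    finally have "((norm p)^2)^2 \<le> (\<delta>0 * M'^2) * (norm p)^2" by (simp add: algebra_simps)
    then have "(norm p)^2 \<le> \<delta>0 * M'^2"
      using d0 by (cases "norm p = 0") (auto simp: power2_eq_square)
    also have "\<dots> = (e * \<kappa>)^2" unfolding \<delta>0_def using M'p by (simp add: power_divide)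
    finally have pn: "norm p \<le> e * \<kappa>" using that kp by (simp add: power2_le_iff_abs_le abs_le_iff)
    define wp where "wp = T \<psi> + \<kappa> *\<^sub>R \<psi>"
    define wm where "wm = T \<psi> - \<kappa> *\<^sub>R \<psi>"
    have wpX: "wp \<in> X" and wmX: "wm \<in> X" unfolding wp_def wm_def using TX ps(1) sub
      by (auto intro: real_vector.subspace_add real_vector.subspace_diff real_vector.subspace_scale)
    have ewp: "T wp - \<kappa> *\<^sub>R wp = p" unfolding wp_def p_def P_def Tadd Tsc
      by (simp add: algebra_simps power2_eq_square)
    have ewm: "T wm - (-\<kappa>) *\<^sub>R wm = p" unfolding wm_def p_def P_def Tdiff Tsc
      by (simp add: algebra_simps power2_eq_square)
    have pl: "(norm (a+b))^2 + (norm (a-b))^2 = 2*(norm a)^2 + 2*(norm b)^2" for a b :: 'a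
      by (simp only: power2_norm_eq_inner inner_add_left inner_add_right inner_diff_left inner_diff_right)
    have par: "(norm wp)^2 + (norm wm)^2 = 2 * (norm (T \<psi>))^2 + 2 * \<kappa>^2" unfolding wp_def wm_def
      using pl[of "T \<psi>" "\<kappa> *\<^sub>R \<psi>"] ps(2) by (simp add: power_mult_distrib)
    have "\<kappa>^2 \<le> (norm (T \<psi>))^2" using kl[OF ps(1,2)] k0 by (intro power_mono) auto
    then have "\<exists>w\<in>X. \<exists>\<sigma>\<in>{\<kappa>, -\<kappa>}. \<kappa> \<le> norm w \<and> T w - \<sigma> *\<^sub>R w = p"
    proof -
      assume h: "\<kappa>^2 \<le> (norm (T \<psi>))^2"
      have "\<kappa>^2 \<le> (norm wp)^2 \<or> \<kappa>^2 \<le> (norm wm)^2" using par h zero_le_power2[of \<kappa>] by linarith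
      then show ?thesis
      proof
        assume "\<kappa>^2 \<le> (norm wp)^2"
        then have "\<kappa> \<le> norm wp" using k0 power2_le_iff_abs_le[OF norm_ge_zero[of wp]] by simp
        then show ?thesis using wpX ewp by blast
      next
        assume "\<kappa>^2 \<le> (norm wm)^2"
        then have "\<kappa> \<le> norm wm" using k0 power2_le_iff_abs_le[OF norm_ge_zero[of wm]] by simp
        then show ?thesis using wmX ewm by blast
      qed
    qed
    then obtain w \<sigma> where w: "w \<in> X" "\<sigma> \<in> {\<kappa>, -\<kappa>}" "\<kappa> \<le> norm w" "T w - \<sigma> *\<^sub>R w = p" by blast
    define x where "x = (1 / norm w) *\<^sub>R w"
    have wn0: "norm w > 0" using w(3) kp by linarith
    have "x \<in> X" unfolding x_def using w(1) sub by (simp add: real_vector.subspace_scale)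
    moreover have "norm x = 1" unfolding x_def using wn0 by simp
    moreover have "norm (T x - \<sigma> *\<^sub>R x) \<le> e"
    proof -
      have "T x - \<sigma> *\<^sub>R x = (1 / norm w) *\<^sub>R p" unfolding x_def Tsc w(4)[symmetric] by (simp add: algebra_simps)
      then have "norm (T x - \<sigma> *\<^sub>R x) = norm p / norm w" using wn0 by simp
      also have "\<dots> \<le> (e * \<kappa>) / \<kappa>" using pn w(3) kp wn0 that
        by (intro frac_le) auto
      also have "\<dots> = e" using kp by simp
      finally show ?thesis .
    qed
    ultimately show ?thesis using w(2) by blast
  qed
  have "\<exists>\<sigma>\<in>{\<kappa>, -\<kappa>}. \<forall>e>0. \<exists>x\<in>X. norm x = 1 \<and> norm (T x - \<sigma> *\<^sub>R x) \<le> e"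
  proof (rule ccontr)
    assume "\<not> ?thesis"
    then obtain e1 e2 where e1: "e1 > 0" "\<forall>x\<in>X. norm x = 1 \<longrightarrow> \<not> norm (T x - \<kappa> *\<^sub>R x) \<le> e1"
      and e2: "e2 > 0" "\<forall>x\<in>X. norm x = 1 \<longrightarrow> \<not> norm (T x - (-\<kappa>) *\<^sub>R x) \<le> e2" by auto
    have "min e1 e2 > 0" using e1 e2 by simp
    from key[OF this] show False using e1 e2 by force
  qed
  then obtain \<sigma> where sg: "\<sigma> \<in> {\<kappa>, -\<kappa>}" and sm: "\<And>e. e > 0 \<Longrightarrow> \<exists>x\<in>X. norm x = 1 \<and> norm (T x - \<sigma> *\<^sub>R x) \<le> e"
    by blast
  have "\<not> X \<subseteq> (\<lambda>u. T u - \<sigma> *\<^sub>R u) ` X"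
  proof (rule not_surj[OF cl sub])
    show "T u - \<sigma> *\<^sub>R u \<in> X" if "u \<in> X" for u
      using that TX sub by (intro real_vector.subspace_diff real_vector.subspace_scale) auto
    show "inner (T u - \<sigma> *\<^sub>R u) v = inner u (T v - \<sigma> *\<^sub>R v)" if "u \<in> X" "v \<in> X" for u v
      using sym[OF that] by (simp add: inner_diff_left inner_diff_right)
  qed (rule sm)
  moreover have "\<bar>\<sigma>\<bar> \<le> norm (T \<phi>)" using sg k0 k1 by auto
  ultimately show ?thesis by blast
qed


lemma l2_restr: "sqs f summable_on UNIV \<Longrightarrow> sqs (\<lambda>x. if x \<in> S then f x else 0) summable_on UNIV"
  by (rule summable_on_comparison_test) (auto simp: sqs_def)

lift_definition prj :: "'a set \<Rightarrow> 'a l2 \<Rightarrow> 'a l2" is "\<lambda>S f x. if x \<in> S then f x else 0"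
  by (simp add: l2_restr)

lemma l2_mult:
  assumes f: "sqs f summable_on UNIV"
  shows "sqs (\<lambda>x. if bounded (range V) then complex_of_real (V x) * f x else 0) summable_on UNIV"
proof (cases "bounded (range V)")
  case True
  then obtain B where B: "\<forall>x. \<bar>V x\<bar> \<le> B" unfolding bounded_iff by auto
  have "(\<lambda>x. B^2 * sqs f x) summable_on UNIV" by (rule summable_on_cmult_right[OF f])
  then have "sqs (\<lambda>x. complex_of_real (V x) * f x) summable_on UNIV"
  proof (rule summable_on_comparison_test)
    fix x
    have "\<bar>V x\<bar>^2 \<le> B^2" using B by (intro power_mono) (auto intro: order_trans[OF abs_ge_zero])
    then show "sqs (\<lambda>x. complex_of_real (V x) * f x) x \<le> B^2 * sqs f x"
      unfolding sqs_def by (simp add: norm_mult power_mult_distrib mult_right_mono)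
  qed (simp add: sqs_def)
  then show ?thesis using True by simp
qed (simp add: sqs_def)

lift_definition mlt :: "('a \<Rightarrow> real) \<Rightarrow> 'a l2 \<Rightarrow> 'a l2" is
  "\<lambda>V f x. if bounded (range V) then complex_of_real (V x) * f x else 0"
  by (simp add: l2_mult)

lemma bij_shift: "bij_betw (\<lambda>x j. x j + e j) UNIV (UNIV :: ('d \<Rightarrow> int) set)"
proof (rule bij_betwI')
  show "((\<lambda>j. x j + e j) = (\<lambda>j. y j + e j)) = (x = y)" for x y :: "'d \<Rightarrow> int"
    by (auto simp: fun_eq_iff)
  show "\<exists>x\<in>UNIV. y = (\<lambda>j. x j + e j)" for y :: "'d \<Rightarrow> int"
    by (rule bexI[of _ "\<lambda>j. y j - e j"]) auto
qed auto

lemma l2_shift: "sqs f summable_on UNIV \<Longrightarrow> sqs (\<lambda>x. f (\<lambda>j. x j + e j)) summable_on (UNIV :: ('d \<Rightarrow> int) set)"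
  using summable_on_reindex_bij_betw[OF bij_shift[of e], of "sqs f"] by (simp add: sqs_def)

lift_definition shl :: "('d \<Rightarrow> int) \<Rightarrow> ('d \<Rightarrow> int) l2 \<Rightarrow> ('d \<Rightarrow> int) l2" is
  "\<lambda>e f x. f (\<lambda>j. x j + e j)"
  by (simp add: l2_shift)

lemma vec_prj[simp]: "vec (prj S f) x = (if x \<in> S then vec f x else 0)" by transfer simp
lemma vec_mlt[simp]: "bounded (range V) \<Longrightarrow> vec (mlt V f) x = complex_of_real (V x) * vec f x" by transfer simp
lemma vec_mlt_nb: "\<not> bounded (range V) \<Longrightarrow> mlt V f = 0" by transfer simp
lemma vec_shl[simp]: "vec (shl e f) x = vec f (\<lambda>j. x j + e j)" by transfer simp

lemma vec_sum_l2: "vec (sum F A) x = (\<Sum>a\<in>A. vec (F a) x)"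
  by (induction A rule: infinite_finite_induct) auto

lemma vec_eqI: "(\<And>x. vec f x = vec g x) \<Longrightarrow> f = g"
  using vec_inject by (metis ext)

lemma inner_l2_eq: "inner f g = infsum (\<lambda>y. Re (vec f y * cnj (vec g y))) UNIV"
  by (simp add: inner_l2_def)

lemma norm_l2_eq: "norm f = sqrt (infsum (\<lambda>y. (cmod (vec f y))^2) UNIV)"
  by (simp add: norm_l2_def)

lemma prj_add: "prj S (f + g) = prj S f + prj S g" by (rule vec_eqI) simp
lemma prj_scale: "prj S (c *\<^sub>R f) = c *\<^sub>R prj S f" by (rule vec_eqI) simp
lemma mlt_add: "mlt V (f + g) = mlt V f + mlt V g"
  by (cases "bounded (range V)") (auto intro!: vec_eqI simp: vec_mlt_nb algebra_simps)
lemma mlt_scale: "mlt V (c *\<^sub>R f) = c *\<^sub>R mlt V f"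
  by (cases "bounded (range V)") (auto intro!: vec_eqI simp: vec_mlt_nb algebra_simps)
lemma shl_add: "shl e (f + g) = shl e f + shl e g" by (rule vec_eqI) simp
lemma shl_scale: "shl e (c *\<^sub>R f) = c *\<^sub>R shl e f" by (rule vec_eqI) simp

lemma prj_sym: "inner (prj S f) g = inner f (prj S g)"
  unfolding inner_l2_eq by (rule infsum_cong) simp
lemma mlt_sym: "inner (mlt V f) g = inner f (mlt V g)"
proof (cases "bounded (range V)")
  case True
  then show ?thesis unfolding inner_l2_eq by (intro infsum_cong) (simp add: algebra_simps)
qed (simp add: vec_mlt_nb)

lemma shl_sym: "inner (shl e f) g = inner f (shl (\<lambda>j. - e j) g)"
proof -
  have "inner f (shl (\<lambda>j. - e j) g) = infsum (\<lambda>z. Re (vec f z * cnj (vec g (\<lambda>j. z j - e j)))) UNIV"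
    unfolding inner_l2_eq by simp
  also have "\<dots> = infsum (\<lambda>x. Re (vec f (\<lambda>j. x j + e j) * cnj (vec g x))) UNIV"
    using infsum_reindex_bij_betw[OF bij_shift[of e], of "\<lambda>z. Re (vec f z * cnj (vec g (\<lambda>j. z j - e j)))"]
    by simp
  finally show ?thesis unfolding inner_l2_eq by simp
qed

lemma norm_shl: "norm (shl e f) = norm f"
proof -
  have "infsum (\<lambda>x. (cmod (vec f (\<lambda>j. x j + e j)))^2) UNIV = infsum (\<lambda>x. (cmod (vec f x))^2) UNIV"
    using infsum_reindex_bij_betw[OF bij_shift[of e], of "\<lambda>z. (cmod (vec f z))^2"] by simp
  then show ?thesis unfolding norm_l2_eq by simp
qed

lemma norm_prj: "norm (prj S f) \<le> norm f"
proof -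
  have s: "(\<lambda>x. (cmod (vec f x))^2) summable_on UNIV" using vec_sum[of f] by (simp add: sqs_def)
  have s2: "(\<lambda>x. (cmod (vec (prj S f) x))^2) summable_on UNIV" using vec_sum[of "prj S f"] by (simp add: sqs_def)
  have "infsum (\<lambda>x. (cmod (vec (prj S f) x))^2) UNIV \<le> infsum (\<lambda>x. (cmod (vec f x))^2) UNIV"
    by (rule infsum_mono[OF s2 s]) simp
  then show ?thesis unfolding norm_l2_eq by simp
qed

lemma norm_mlt: assumes "\<forall>x. \<bar>V x\<bar> \<le> B" shows "norm (mlt V f) \<le> B * norm f"
proof -
  have B0: "B \<ge> 0" using assms abs_ge_zero order_trans by blast
  have bd: "bounded (range V)" unfolding bounded_iff using assms by auto
  have s: "(\<lambda>x. B^2 * (cmod (vec f x))^2) summable_on UNIV"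
    using summable_on_cmult_right[OF vec_sum[of f]] by (simp add: sqs_def)
  have s2: "(\<lambda>x. (cmod (vec (mlt V f) x))^2) summable_on UNIV" using vec_sum[of "mlt V f"] by (simp add: sqs_def)
  have "infsum (\<lambda>x. (cmod (vec (mlt V f) x))^2) UNIV \<le> infsum (\<lambda>x. B^2 * (cmod (vec f x))^2) UNIV"
  proof (rule infsum_mono[OF s2 s])
    fix x
    have "\<bar>V x\<bar>^2 \<le> B^2" using assms by (intro power_mono) auto
    then show "(cmod (vec (mlt V f) x))^2 \<le> B^2 * (cmod (vec f x))^2"
      using bd by (simp add: norm_mult power_mult_distrib mult_right_mono)
  qed
  also have "\<dots> = B^2 * infsum (\<lambda>x. (cmod (vec f x))^2) UNIV" by (rule infsum_cmult_right') 
  finally have "(norm (mlt V f))^2 \<le> (B * norm f)^2"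
    unfolding norm_l2_sq power_mult_distrib by simp
  then show ?thesis using B0 power2_le_iff_abs_le[of "B * norm f" "norm (mlt V f)"] by simp
qed


definition Edir :: "('d::finite \<Rightarrow> int) set" where
  "Edir = {e. (\<Sum>j\<in>UNIV. \<bar>e j\<bar>) = 1}"

lemma Edir_coord: "e \<in> Edir \<Longrightarrow> \<bar>e j\<bar> \<le> 1"
proof -
  assume "e \<in> Edir"
  then have "(\<Sum>j\<in>UNIV. \<bar>e j\<bar>) = 1" by (simp add: Edir_def)
  moreover have "\<bar>e j\<bar> \<le> (\<Sum>j\<in>UNIV. \<bar>e j\<bar>)" by (rule member_le_sum) auto
  ultimately show ?thesis by simp
qed

lemma finite_Edir: "finite (Edir :: ('d::finite \<Rightarrow> int) set)"
proof (rule finite_subset)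
  show "Edir \<subseteq> Pi\<^sub>E UNIV (\<lambda>_::'d. {-1..1::int})"
  proof
    fix e :: "'d \<Rightarrow> int" assume "e \<in> Edir"
    then have "\<forall>j. \<bar>e j\<bar> \<le> 1" using Edir_coord by blast
    then show "e \<in> Pi\<^sub>E UNIV (\<lambda>_::'d. {-1..1::int})" by (auto simp: PiE_UNIV_domain abs_le_iff)
  qed
  show "finite (Pi\<^sub>E UNIV (\<lambda>_::'d. {-1..1::int}))" by (rule finite_PiE) auto
qed

lemma Edir_neg: "e \<in> Edir \<Longrightarrow> (\<lambda>j. - e j) \<in> Edir" by (simp add: Edir_def)

lemma lap_eq: "lap \<phi> x = (\<Sum>e\<in>Edir. \<phi> (\<lambda>j. x j + e j))"
proof -
  have "{y. (\<Sum>j\<in>UNIV. \<bar>y j - x j\<bar>) = 1} = (\<lambda>e j. x j + e j) ` Edir"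
  proof (rule set_eqI, rule iffI)
    fix y assume "y \<in> {y. (\<Sum>j\<in>UNIV. \<bar>y j - x j\<bar>) = 1}"
    then have "(\<lambda>j. y j - x j) \<in> Edir" by (simp add: Edir_def)
    moreover have "y = (\<lambda>j. x j + (y j - x j))" by simp
    ultimately show "y \<in> (\<lambda>e j. x j + e j) ` Edir" by force
  qed (auto simp: Edir_def)
  moreover have "inj_on (\<lambda>e j. x j + e j) Edir" by (auto simp: inj_on_def fun_eq_iff)
  ultimately show ?thesis unfolding lap_def by (simp add: sum.reindex o_def)
qed

definition lapl :: "('d::finite \<Rightarrow> int) l2 \<Rightarrow> ('d \<Rightarrow> int) l2" where
  "lapl f = (\<Sum>e\<in>Edir. shl e f)"

lemma vec_lapl: "vec (lapl f) x = lap (vec f) x"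
  unfolding lapl_def lap_eq vec_sum_l2 by simp

lemma lapl_add: "lapl (f + g) = lapl f + lapl g"
  unfolding lapl_def by (simp add: shl_add sum.distrib)
lemma lapl_scale: "lapl (c *\<^sub>R f) = c *\<^sub>R lapl f"
  unfolding lapl_def by (simp add: shl_scale scaleR_sum_right)

lemma lapl_sym: fixes f g :: "('d::finite \<Rightarrow> int) l2" shows "inner (lapl f) g = inner f (lapl g)"
proof -
  have "inner (lapl f) g = (\<Sum>e\<in>Edir. inner f (shl (\<lambda>j. - e j) g))"
    unfolding lapl_def inner_sum_left shl_sym ..
  also have "\<dots> = (\<Sum>e\<in>Edir. inner f (shl e g))"
  proof -
    have "bij_betw (\<lambda>e j. - e j) Edir (Edir :: ('d \<Rightarrow> int) set)"
      by (rule bij_betwI[where g="\<lambda>e j. - e j"]) (auto simp: Edir_neg)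
    then show ?thesis by (rule sum.reindex_bij_betw)
  qed
  also have "\<dots> = inner f (lapl g)" unfolding lapl_def inner_sum_right ..
  finally show ?thesis .
qed

lemma norm_lapl: fixes f :: "('d::finite \<Rightarrow> int) l2" shows "norm (lapl f) \<le> real (card (Edir :: ('d::finite \<Rightarrow> int) set)) * norm f"
proof -
  have "norm (lapl f) \<le> (\<Sum>e\<in>Edir. norm (shl e f))" unfolding lapl_def by (rule norm_sum)
  also have "\<dots> = real (card (Edir :: ('d \<Rightarrow> int) set)) * norm f" by (simp add: norm_shl)
  finally show ?thesis .
qed

definition Hl :: "real \<Rightarrow> (('d::finite) pt \<Rightarrow> real) \<Rightarrow> 'd pt set \<Rightarrow> 'd pt l2 \<Rightarrow> 'd pt l2" where
  "Hl eps V \<Theta> f = prj \<Theta> ((- eps) *\<^sub>R lapl (prj \<Theta> f) + mlt V (prj \<Theta> f))"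

lemma vec_Hl: "bounded (range V) \<Longrightarrow> vec (Hl eps V \<Theta> f) = Hrestr eps V \<Theta> (vec f)"
proof
  fix x assume bd: "bounded (range V)"
  have r: "restr \<Theta> (vec f) = vec (prj \<Theta> f)" by (auto simp: restr_def)
  show "vec (Hl eps V \<Theta> f) x = Hrestr eps V \<Theta> (vec f) x"
    unfolding Hl_def Hrestr_def Hop_def r using bd by (simp add: restr_def vec_lapl)
qed

lemma prj_diff: "prj S (f - g) = prj S f - prj S g" by (rule vec_eqI) simp
lemma prj_uminus: "prj S (- f) = - prj S f" by (rule vec_eqI) simp

lemma Hl_linear: "linear (Hl eps V \<Theta>)"
  by (rule linearI) (simp_all add: Hl_def prj_add prj_diff prj_scale lapl_add lapl_scale mlt_add mlt_scale prj_uminus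
     scaleR_add_right scaleR_diff_right)

lemma Hl_sym: "inner (Hl eps V \<Theta> f) g = inner f (Hl eps V \<Theta> g)"
proof -
  have "inner (Hl eps V \<Theta> f) g = inner ((- eps) *\<^sub>R lapl (prj \<Theta> f) + mlt V (prj \<Theta> f)) (prj \<Theta> g)"
    unfolding Hl_def by (rule prj_sym)
  also have "\<dots> = (- eps) * inner (lapl (prj \<Theta> f)) (prj \<Theta> g) + inner (mlt V (prj \<Theta> f)) (prj \<Theta> g)"
    by (simp only: inner_add_left inner_scaleR_left)
  also have "\<dots> = (- eps) * inner (prj \<Theta> f) (lapl (prj \<Theta> g)) + inner (prj \<Theta> f) (mlt V (prj \<Theta> g))"
    by (simp add: lapl_sym mlt_sym)
  also have "\<dots> = inner (prj \<Theta> f) ((- eps) *\<^sub>R lapl (prj \<Theta> g) + mlt V (prj \<Theta> g))"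
    by (simp only: inner_add_right inner_scaleR_right)
  also have "\<dots> = inner f (Hl eps V \<Theta> g)"
    unfolding Hl_def by (rule prj_sym)
  finally show ?thesis .
qed

lemma Hl_bnd:
  fixes V :: "('d::finite \<Rightarrow> int) \<Rightarrow> real"
  assumes "\<forall>x. \<bar>V x\<bar> \<le> B"
  shows "norm (Hl eps V \<Theta> f) \<le> (\<bar>eps\<bar> * real (card (Edir :: ('d::finite \<Rightarrow> int) set)) + B) * norm f"
proof -
  have B0: "B \<ge> 0" using assms abs_ge_zero order_trans by blast
  have "norm (Hl eps V \<Theta> f) \<le> norm ((- eps) *\<^sub>R lapl (prj \<Theta> f) + mlt V (prj \<Theta> f))"
    unfolding Hl_def by (rule norm_prj)
  also have "\<dots> \<le> \<bar>eps\<bar> * norm (lapl (prj \<Theta> f)) + norm (mlt V (prj \<Theta> f))"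
    by (rule order_trans[OF norm_triangle_ineq]) simp
  also have "\<dots> \<le> \<bar>eps\<bar> * (real (card (Edir :: ('d \<Rightarrow> int) set)) * norm (prj \<Theta> f)) + B * norm (prj \<Theta> f)"
    by (intro add_mono mult_left_mono norm_lapl norm_mlt assms) auto
  also have "\<dots> \<le> \<bar>eps\<bar> * (real (card (Edir :: ('d \<Rightarrow> int) set)) * norm f) + B * norm f"
    using norm_prj[of \<Theta> f] B0 by (intro add_mono mult_left_mono) auto
  finally show ?thesis by (simp add: algebra_simps)
qed

definition Xs :: "'a set \<Rightarrow> 'a l2 set" where
  "Xs \<Theta> = {f. \<forall>y. y \<notin> \<Theta> \<longrightarrow> vec f y = 0}"

lemma Xs_subspace: "subspace (Xs \<Theta>)"
  unfolding subspace_def Xs_def by simp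

lemma Xs_closed: "closed (Xs \<Theta>)"
proof -
  have bl: "bounded_linear (\<lambda>f. vec f y)" for y :: 'a
  proof -
    have "bounded_linear (\<lambda>f::'a l2. vec f y)"
      by (rule bounded_linear_intro[where K=1]) (simp_all add: vec_le_norm scaleR_conv_of_real)
    then show ?thesis .
  qed
  have "Xs \<Theta> = (\<Inter>y\<in>-\<Theta>. {f. vec f y = (\<lambda>_. 0) f})" unfolding Xs_def by auto
  also have "closed \<dots>"
    by (intro closed_INT ballI closed_Collect_eq linear_continuous_on bl continuous_on_const)
  finally show ?thesis .
qed

lemma Hl_Xs: "Hl eps V \<Theta> f \<in> Xs \<Theta>" unfolding Hl_def Xs_def by simp

lemma spec_bound:
  fixes V :: "('d::finite) pt \<Rightarrow> real" and \<phi> :: "'d pt \<Rightarrow> complex" and lam :: real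
  assumes bd: "bounded (range V)" and supp: "\<forall>y. y \<notin> \<Theta> \<longrightarrow> \<phi> y = 0" and n1: "l2norm \<phi> = 1"
  shows "infdist (complex_of_real lam) (spec eps V \<Theta>)
          \<le> l2norm (\<lambda>y. Hrestr eps V \<Theta> \<phi> y - complex_of_real lam * \<phi> y)"
proof -
  have sm: "sqs \<phi> summable_on UNIV"
  proof (rule ccontr)
    assume "\<not> ?thesis"
    then have "infsum (sqs \<phi>) UNIV = 0" by (rule infsum_not_exists)
    then show False using n1 by (simp add: l2norm_def sqs_def)
  qed
  define p where "p = mk \<phi>"
  have vp: "vec p = \<phi>" unfolding p_def using sm by (simp add: mk_inverse)
  obtain B where B: "\<forall>x. \<bar>V x\<bar> \<le> B" using bd unfolding bounded_iff by auto
  define T where "T u = Hl eps V \<Theta> u - lam *\<^sub>R u" for u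
  have vT: "vec (T u) = (\<lambda>y. Hrestr eps V \<Theta> (vec u) y - complex_of_real lam * vec u y)" for u
    unfolding T_def using vec_Hl[OF bd] by (simp add: fun_eq_iff)
  have "\<exists>\<sigma>. \<bar>\<sigma>\<bar> \<le> norm (T p) \<and> \<not> Xs \<Theta> \<subseteq> (\<lambda>u. T u - \<sigma> *\<^sub>R u) ` Xs \<Theta>"
  proof (rule spec_pt[OF Xs_closed Xs_subspace])
    show "T u \<in> Xs \<Theta>" if "u \<in> Xs \<Theta>" for u
      unfolding T_def using that Hl_Xs Xs_subspace by (intro real_vector.subspace_diff real_vector.subspace_scale) auto
    show "linear T" unfolding T_def by (intro linear_compose_sub Hl_linear linear_scaleR)
    show "inner (T u) v = inner u (T v)" for u v
      unfolding T_def by (simp add: inner_diff_left inner_diff_right Hl_sym)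
    show "norm (T u) \<le> ((\<bar>eps\<bar> * real (card (Edir :: ('d \<Rightarrow> int) set)) + B) + \<bar>lam\<bar>) * norm u" for u
    proof -
      have "norm (T u) \<le> norm (Hl eps V \<Theta> u) + norm (lam *\<^sub>R u)" unfolding T_def by (rule norm_triangle_ineq4)
      also have "\<dots> \<le> (\<bar>eps\<bar> * real (card (Edir :: ('d \<Rightarrow> int) set)) + B) * norm u + \<bar>lam\<bar> * norm u"
        using Hl_bnd[OF B] by (intro add_mono) auto
      finally show ?thesis by (simp add: algebra_simps)
    qed
    show "p \<in> Xs \<Theta>" unfolding Xs_def using vp supp by simp
    show "norm p = 1" using n1 vp unfolding norm_l2_eq l2norm_def by simp
  qed
  then obtain \<sigma> where s1: "\<bar>\<sigma>\<bar> \<le> norm (T p)" and s2: "\<not> Xs \<Theta> \<subseteq> (\<lambda>u. T u - \<sigma> *\<^sub>R u) ` Xs \<Theta>"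
    by blast
  have nT: "norm (T p) = l2norm (\<lambda>y. Hrestr eps V \<Theta> \<phi> y - complex_of_real lam * \<phi> y)"
    unfolding norm_l2_eq l2norm_def vT vp ..
  define z where "z = complex_of_real (lam + \<sigma>)"
  have zs: "z \<in> spec eps V \<Theta>"
  proof -
    have "\<not> bij_betw (\<lambda>f y. Hrestr eps V \<Theta> f y - z * f y) (l2space \<Theta>) (l2space \<Theta>)"
    proof
      assume bij: "bij_betw (\<lambda>f y. Hrestr eps V \<Theta> f y - z * f y) (l2space \<Theta>) (l2space \<Theta>)"
      have "Xs \<Theta> \<subseteq> (\<lambda>u. T u - \<sigma> *\<^sub>R u) ` Xs \<Theta>"
      proof
        fix u assume u: "u \<in> Xs \<Theta>"
        then have "vec u \<in> l2space \<Theta>" unfolding Xs_def l2space_def using vec_sum[of u] by (simp add: sqs_def)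
        then obtain g where g: "g \<in> l2space \<Theta>" "vec u = (\<lambda>y. Hrestr eps V \<Theta> g y - z * g y)"
          using bij unfolding bij_betw_def by blast
        have gs: "sqs g summable_on UNIV" using g(1) unfolding l2space_def sqs_def by simp
        define w where "w = mk g"
        have vw: "vec w = g" unfolding w_def using gs by (simp add: mk_inverse)
        have "w \<in> Xs \<Theta>" using g(1) vw unfolding l2space_def Xs_def by simp
        moreover have "u = T w - \<sigma> *\<^sub>R w"
          by (rule vec_eqI) (simp add: vT vw g(2) z_def algebra_simps)
        ultimately show "u \<in> (\<lambda>u. T u - \<sigma> *\<^sub>R u) ` Xs \<Theta>" by blast
      qed
      then show False using s2 by blast
    qed
    then show ?thesis unfolding spec_def by simp
  qed
  have "infdist (complex_of_real lam) (spec eps V \<Theta>) \<le> dist (complex_of_real lam) z"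
    by (rule infdist_le[OF zs])
  also have "\<dots> = \<bar>\<sigma>\<bar>" unfolding z_def dist_complex_def
    by (simp add: norm_of_real[symmetric] del: norm_of_real) (simp add: norm_of_real)
  finally show ?thesis using s1 nT by simp
qed


lemma card_int_ball:
  assumes "R \<ge> 0"
  shows "real (card {k::int. \<bar>real_of_int k - c\<bar> \<le> R}) \<le> 2 * R + 1"
proof -
  have sub: "{k::int. \<bar>real_of_int k - c\<bar> \<le> R} \<subseteq> {\<lceil>c - R\<rceil> .. \<lfloor>c + R\<rfloor>}"
    by (auto simp: abs_le_iff ceiling_le_iff le_floor_iff)
  have "card {k::int. \<bar>real_of_int k - c\<bar> \<le> R} \<le> card {\<lceil>c - R\<rceil> .. \<lfloor>c + R\<rfloor>}"
    by (rule card_mono[OF _ sub]) simp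
  also have "\<dots> = nat (\<lfloor>c + R\<rfloor> - \<lceil>c - R\<rceil> + 1)" by simp
  finally have "real (card {k::int. \<bar>real_of_int k - c\<bar> \<le> R}) \<le> real (nat (\<lfloor>c + R\<rfloor> - \<lceil>c - R\<rceil> + 1))"
    by linarith
  also have "\<dots> \<le> 2 * R + 1"
  proof (cases "\<lfloor>c + R\<rfloor> - \<lceil>c - R\<rceil> + 1 \<ge> 0")
    case True
    then have "real (nat (\<lfloor>c + R\<rfloor> - \<lceil>c - R\<rceil> + 1)) = real_of_int (\<lfloor>c + R\<rfloor> - \<lceil>c - R\<rceil> + 1)" by simp
    also have "\<dots> \<le> 2 * R + 1" using of_int_floor_le[of "c+R"] le_of_int_ceiling[of "c - R"]
      unfolding of_int_add of_int_diff of_int_1 by linarith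
    finally show ?thesis .
  next
    case False then show ?thesis using assms by simp
  qed
  finally show ?thesis .
qed

lemma card_int_shell:
  "card {k::int. \<bar>real_of_int k - c\<bar> \<le> R + 1 \<and> \<not> \<bar>real_of_int k - c\<bar> \<le> R} \<le> 2"
proof -
  have "{k::int. \<bar>real_of_int k - c\<bar> \<le> R + 1 \<and> \<not> \<bar>real_of_int k - c\<bar> \<le> R} \<subseteq> {\<lfloor>c + R + 1\<rfloor>, \<lceil>c - R - 1\<rceil>}"
  proof
    fix k assume k: "k \<in> {k::int. \<bar>real_of_int k - c\<bar> \<le> R + 1 \<and> \<not> \<bar>real_of_int k - c\<bar> \<le> R}"
    show "k \<in> {\<lfloor>c + R + 1\<rfloor>, \<lceil>c - R - 1\<rceil>}"
    proof (cases "real_of_int k - c > R")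
      case True
      then have "\<lfloor>c + R + 1\<rfloor> = k" using k by (intro floor_unique) (auto simp: abs_le_iff)
      then show ?thesis by simp
    next
      case False
      then have "\<lceil>c - R - 1\<rceil> = k" using k by (intro ceiling_unique) (auto simp: abs_le_iff)
      then show ?thesis by simp
    qed
  qed
  then have "card {k::int. \<bar>real_of_int k - c\<bar> \<le> R + 1 \<and> \<not> \<bar>real_of_int k - c\<bar> \<le> R} \<le> card {\<lfloor>c + R + 1\<rfloor>, \<lceil>c - R - 1\<rceil>}"
    by (rule card_mono[rotated]) simp
  also have "\<dots> \<le> 2" by (simp add: card_insert_le_m1)
  finally show ?thesis .
qed

lemma abs_tri_aux: "\<bar>u + v - c\<bar> \<le> R \<Longrightarrow> \<bar>v\<bar> \<le> 1 \<Longrightarrow> \<bar>u - c\<bar> \<le> R + (1::real)"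
  by (simp add: abs_le_iff)

definition obdry :: "real \<Rightarrow> ('d::finite \<Rightarrow> real) \<Rightarrow> 'd pt set" where
  "obdry L a = {y. y \<notin> box L a \<and> (\<exists>e\<in>Edir. (\<lambda>j. y j + e j) \<in> box L a)}"

lemma card_obdry:
  fixes a :: "'d::finite \<Rightarrow> real"
  assumes L: "L \<ge> 3"
  shows "finite (obdry L a) \<and> real (card (obdry L a)) \<le> real CARD('d) * 2 ^ CARD('d) * L ^ (CARD('d) - 1)"
proof -
  define I where "I i = {k::int. \<bar>real_of_int k - a i\<bar> \<le> L/2}" for i
  define I' where "I' i = {k::int. \<bar>real_of_int k - a i\<bar> \<le> L/2 + 1}" for i
  define F where "F j = Pi\<^sub>E UNIV (\<lambda>i. if i = j then I' j - I j else I' i)" for j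
  have fI': "finite (I' i)" for i
  proof -
    have "I' i \<subseteq> {\<lceil>a i - (L/2+1)\<rceil> .. \<lfloor>a i + (L/2+1)\<rfloor>}"
      unfolding I'_def by (auto simp: abs_le_iff ceiling_le_iff le_floor_iff)
    then show ?thesis by (rule finite_subset) simp
  qed
  have cI': "real (card (I' i)) \<le> L + 3" for i
    using card_int_ball[of "L/2+1" "a i"] L unfolding I'_def by simp
  have cA: "real (card (I' j - I j)) \<le> 2" for j
    using card_int_shell[of "a j" "L/2"] unfolding I'_def I_def set_diff_eq by simp
  have sub: "obdry L a \<subseteq> (\<Union>j. F j)"
  proof
    fix y assume y: "y \<in> obdry L a"
    then obtain e where e: "e \<in> Edir" "(\<lambda>j. y j + e j) \<in> box L a" unfolding obdry_def by blast
    from y obtain j where j: "\<not> \<bar>real_of_int (y j) - a j\<bar> \<le> L / 2" unfolding obdry_def box_def by auto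
    have "y i \<in> I' i" for i
    proof -
      have "\<bar>real_of_int (y i + e i) - a i\<bar> \<le> L / 2" using e(2) unfolding box_def by auto
      moreover have "\<bar>real_of_int (e i)\<bar> \<le> 1" using Edir_coord[OF e(1), of i] by linarith
      ultimately have "\<bar>real_of_int (y i) - a i\<bar> \<le> L/2 + 1"
        using abs_tri_aux[of "real_of_int (y i)" "real_of_int (e i)" "a i" "L/2"] by simp
      then show ?thesis unfolding I'_def by simp
    qed
    then have "y \<in> F j" unfolding F_def using j by (auto simp: PiE_UNIV_domain I_def)
    then show "y \<in> (\<Union>j. F j)" by blast
  qed
  have fF: "finite (F j)" for j unfolding F_def by (rule finite_PiE) (auto simp: fI')
  have cF: "real (card (F j)) \<le> 2 * (L + 3) ^ (CARD('d) - 1)" for j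
  proof -
    have "real (card (F j)) = (\<Prod>i\<in>UNIV. real (card (if i = j then I' j - I j else I' i)))"
      unfolding F_def by (simp add: card_PiE)
    also have "\<dots> = real (card (I' j - I j)) * (\<Prod>i\<in>UNIV - {j}. real (card (I' i)))"
      by (subst prod.remove[of UNIV j]) (auto intro!: prod.cong)
    also have "\<dots> \<le> 2 * (\<Prod>i\<in>UNIV - {j}. (L + 3))"
      by (intro mult_mono prod_mono cA) (auto intro: prod_nonneg cI')
    also have "\<dots> = 2 * (L + 3) ^ (CARD('d) - 1)" by (simp add: card_Diff_singleton)
    finally show ?thesis .
  qed
  have fin: "finite (obdry L a)" by (rule finite_subset[OF sub]) (auto intro: fF)
  have "card (obdry L a) \<le> card (\<Union>j. F j)" by (rule card_mono[OF _ sub]) (auto intro: fF)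
  also have "\<dots> \<le> (\<Sum>j\<in>UNIV. card (F j))" by (rule card_UN_le) simp
  finally have "real (card (obdry L a)) \<le> real (\<Sum>j\<in>UNIV. card (F j))" by (rule of_nat_mono)
  also have "\<dots> = (\<Sum>j\<in>UNIV. real (card (F j)))" by (rule of_nat_sum)
  also have "\<dots> \<le> (\<Sum>j\<in>(UNIV::'d set). 2 * (L + 3) ^ (CARD('d) - 1))" by (rule sum_mono) (rule cF)
  also have "\<dots> = real CARD('d) * (2 * (L + 3) ^ (CARD('d) - 1))" by simp
  also have "\<dots> \<le> real CARD('d) * (2 * (2 * L) ^ (CARD('d) - 1))"
    using L by (intro mult_left_mono[OF mult_left_mono[OF power_mono]]) auto
  also have "\<dots> = real CARD('d) * 2 ^ CARD('d) * L ^ (CARD('d) - 1)"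
  proof -
    have "(2::real) * 2 ^ (CARD('d) - 1) = 2 ^ CARD('d)"
      using zero_less_card_finite[where 'a='d] by (cases "CARD('d)") simp_all
    note h = this
    have "real CARD('d) * (2 * (2 * L) ^ (CARD('d) - 1)) = real CARD('d) * ((2 * 2 ^ (CARD('d) - 1)) * L ^ (CARD('d) - 1))"
      by (simp only: power_mult_distrib mult.assoc)
    also have "\<dots> = real CARD('d) * (2 ^ CARD('d) * L ^ (CARD('d) - 1))" by (simp only: h)
    finally show ?thesis by (simp only: mult.assoc)
  qed
  finally show ?thesis using fin by simp
qed


lemma supnorm_ge: "\<bar>w j\<bar> \<le> supnorm (w :: ('d::finite) pt)"
  unfolding supnorm_def by (rule Max_ge) auto

lemma supnorm_ex: "\<exists>j. supnorm (w :: ('d::finite) pt) = \<bar>w j\<bar>"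
proof -
  have "supnorm w \<in> range (\<lambda>j. \<bar>w j\<bar>)" unfolding supnorm_def by (rule Max_in) auto
  then show ?thesis by auto
qed

lemma supnorm_shift:
  assumes "e \<in> Edir"
  shows "supnorm (y - x) \<le> supnorm ((\<lambda>j. y j + e j) - x) + 1"
proof -
  obtain j where j: "supnorm (y - x) = \<bar>(y - x) j\<bar>" using supnorm_ex by blast
  have "\<bar>(y - x) j\<bar> = \<bar>((\<lambda>j. y j + e j) - x) j - e j\<bar>" by simp
  also have "\<dots> \<le> \<bar>((\<lambda>j. y j + e j) - x) j\<bar> + \<bar>e j\<bar>" by (rule abs_triangle_ineq4)
  also have "\<dots> \<le> supnorm ((\<lambda>j. y j + e j) - x) + 1"
    by (rule add_mono[OF supnorm_ge Edir_coord[OF assms]])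
  finally show ?thesis using j by simp
qed

lemma resid_vals:
  assumes sub: "B \<subseteq> \<Theta>" and supp: "\<forall>y. y \<notin> B \<longrightarrow> \<phi> y = 0"
    and eig: "Hrestr eps V B \<phi> = (\<lambda>y. complex_of_real lam * \<phi> y)"
  shows "y \<notin> \<Theta> - B \<Longrightarrow> Hrestr eps V \<Theta> \<phi> y - complex_of_real lam * \<phi> y = 0"
    and "y \<in> \<Theta> - B \<Longrightarrow> Hrestr eps V \<Theta> \<phi> y - complex_of_real lam * \<phi> y = - complex_of_real eps * lap \<phi> y"
proof -
  have r1: "restr \<Theta> \<phi> = \<phi>" using sub supp by (auto simp: restr_def fun_eq_iff)
  have r2: "restr B \<phi> = \<phi>" using supp by (auto simp: restr_def fun_eq_iff)
  have HT: "Hrestr eps V \<Theta> \<phi> y = (if y \<in> \<Theta> then Hop eps V \<phi> y else 0)" for y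
    unfolding Hrestr_def r1 by (simp add: restr_def)
  have HB: "(if y \<in> B then Hop eps V \<phi> y else 0) = complex_of_real lam * \<phi> y" for y
    using fun_cong[OF eig, of y] unfolding Hrestr_def r2 by (simp add: restr_def)
  show "Hrestr eps V \<Theta> \<phi> y - complex_of_real lam * \<phi> y = 0" if "y \<notin> \<Theta> - B"
  proof (cases "y \<in> B")
    case True
    then show ?thesis using HT[of y] HB[of y] sub by auto
  next
    case False
    then have "y \<notin> \<Theta>" using that by blast
    then show ?thesis using HT[of y] supp False by simp
  qed
  show "Hrestr eps V \<Theta> \<phi> y - complex_of_real lam * \<phi> y = - complex_of_real eps * lap \<phi> y" if "y \<in> \<Theta> - B"
    using that HT[of y] supp by (simp add: Hop_def)
qed

lemma resid_bound:
  fixes V :: "('d::finite) pt \<Rightarrow> real" and \<phi> :: "'d pt \<Rightarrow> complex"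
  assumes epos: "0 < eps" "eps \<le> eps0" and sub: "box L a \<subseteq> \<Theta>" and L: "L \<ge> 3"
    and supp: "\<forall>y. y \<notin> box L a \<longrightarrow> \<phi> y = 0"
    and eig: "Hrestr eps V (box L a) \<phi> = (\<lambda>y. complex_of_real lam * \<phi> y)"
    and xin: "x \<in> interior_pts (box L a) \<Theta> (real_of_int t)"
    and loc: "\<forall>z\<in>box L a. supnorm (z - x) \<ge> t \<longrightarrow> cmod (\<phi> z) \<le> \<beta>"
    and b0: "\<beta> \<ge> 0"
  shows "l2norm (\<lambda>y. Hrestr eps V \<Theta> \<phi> y - complex_of_real lam * \<phi> y)
     \<le> eps0 * real (card (Edir :: ('d \<Rightarrow> int) set)) * sqrt (real CARD('d) * 2 ^ CARD('d))
        * L powr ((real CARD('d) - 1) / 2) * \<beta>"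
proof -
  define B where "B = box L a"
  define r where "r y = Hrestr eps V \<Theta> \<phi> y - complex_of_real lam * \<phi> y" for y
  define OB where "OB = obdry L a"
  define cE where "cE = real (card (Edir :: ('d \<Rightarrow> int) set))"
  define bb where "bb = eps * cE * \<beta>"
  have cE0: "cE \<ge> 0" unfolding cE_def by simp
  have bb0: "bb \<ge> 0" unfolding bb_def using epos cE0 b0 by simp
  have rv1: "r y = 0" if "y \<notin> \<Theta> - B" for y
    unfolding r_def B_def by (rule resid_vals(1)[OF sub supp eig]) (use that B_def in simp)
  have rv2: "r y = - complex_of_real eps * lap \<phi> y" if "y \<in> \<Theta> - B" for y
    unfolding r_def B_def by (rule resid_vals(2)[OF sub supp eig]) (use that B_def in simp)
  have tbd: "cmod (\<phi> (\<lambda>j. y j + e j)) \<le> \<beta>" if "y \<in> \<Theta> - B" "e \<in> Edir" for y e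
  proof (cases "(\<lambda>j. y j + e j) \<in> B")
    case True
    have "real_of_int (supnorm (y - x)) > real_of_int \<lfloor>real_of_int t\<rfloor>"
      using xin that(1) unfolding interior_pts_def B_def by blast
    then have "supnorm (y - x) > t" by simp
    then have "supnorm ((\<lambda>j. y j + e j) - x) \<ge> t" using supnorm_shift[OF that(2), of y x] by linarith
    then show ?thesis using loc True unfolding B_def by blast
  next
    case False
    then show ?thesis using supp b0 unfolding B_def by simp
  qed
  have rb: "cmod (r y) \<le> bb" for y
  proof (cases "y \<in> \<Theta> - B")
    case True
    have "cmod (lap \<phi> y) \<le> (\<Sum>e\<in>Edir. cmod (\<phi> (\<lambda>j. y j + e j)))" unfolding lap_eq by (rule norm_sum)
    also have "\<dots> \<le> (\<Sum>e\<in>(Edir :: ('d \<Rightarrow> int) set). \<beta>)" by (rule sum_mono) (rule tbd[OF True])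
    also have "\<dots> = cE * \<beta>" unfolding cE_def by simp
    finally have "cmod (lap \<phi> y) \<le> cE * \<beta>" .
    then have "eps * cmod (lap \<phi> y) \<le> eps * (cE * \<beta>)" using epos by (intro mult_left_mono) auto
    then show ?thesis unfolding rv2[OF True] bb_def using epos by (simp add: norm_mult)
  next
    case False then show ?thesis using rv1 bb0 by simp
  qed
  have rO: "r y = 0" if "y \<notin> OB" for y
  proof (cases "y \<in> \<Theta> - B")
    case True
    have "lap \<phi> y = 0"
    proof -
      have "\<phi> (\<lambda>j. y j + e j) = 0" if "e \<in> Edir" for e
      proof (rule ccontr)
        assume "\<phi> (\<lambda>j. y j + e j) \<noteq> 0"
        then have "(\<lambda>j. y j + e j) \<in> B" using supp unfolding B_def by blast
        then have "y \<in> OB" using True that unfolding OB_def obdry_def B_def by blast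
        then show False using \<open>y \<notin> OB\<close> by blast
      qed
      then show ?thesis unfolding lap_eq by simp
    qed
    then show ?thesis using rv2[OF True] by simp
  next
    case False then show ?thesis by (rule rv1)
  qed
  have cO: "finite OB" "real (card OB) \<le> real CARD('d) * 2 ^ CARD('d) * L ^ (CARD('d) - 1)"
    using card_obdry[OF L, of a] unfolding OB_def by auto
  have "infsum (\<lambda>y. (cmod (r y))^2) UNIV = infsum (\<lambda>y. (cmod (r y))^2) OB"
    by (rule infsum_cong_neutral) (auto simp: rO)
  also have "\<dots> = (\<Sum>y\<in>OB. (cmod (r y))^2)" using cO(1) by simp
  also have "\<dots> \<le> (\<Sum>y\<in>OB. bb^2)" by (rule sum_mono) (use rb in \<open>auto intro: power_mono\<close>)
  also have "\<dots> = real (card OB) * bb^2" by simp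
  finally have i1: "infsum (\<lambda>y. (cmod (r y))^2) UNIV \<le> real (card OB) * bb^2" .
  have "l2norm r \<le> sqrt (real (card OB) * bb^2)" unfolding l2norm_def by (rule real_sqrt_le_mono[OF i1])
  also have "\<dots> = sqrt (real (card OB)) * bb" using bb0 by (simp add: real_sqrt_mult)
  also have "\<dots> \<le> sqrt (real CARD('d) * 2 ^ CARD('d) * L ^ (CARD('d) - 1)) * bb"
    using bb0 cO(2) by (intro mult_right_mono real_sqrt_le_mono) auto
  also have "\<dots> = sqrt (real CARD('d) * 2 ^ CARD('d)) * L powr ((real CARD('d) - 1) / 2) * bb"
  proof -
    have "sqrt (L ^ (CARD('d) - 1)) = L powr ((real CARD('d) - 1) / 2)"
    proof -
      have "L ^ (CARD('d) - 1) = L powr (real (CARD('d) - 1))" using L by (intro powr_realpow[symmetric]) auto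
      also have "real (CARD('d) - 1) = real CARD('d) - 1"
        using zero_less_card_finite[where 'a='d] by (simp add: of_nat_diff)
      finally have "sqrt (L ^ (CARD('d) - 1)) = sqrt (L powr (real CARD('d) - 1))" by simp
      also have "\<dots> = (L powr (real CARD('d) - 1)) powr (1/2)" by (simp add: powr_half_sqrt)
      also have "\<dots> = L powr ((real CARD('d) - 1) / 2)" by (simp add: powr_powr)
      finally show ?thesis .
    qed
    then show ?thesis by (simp add: real_sqrt_mult)
  qed
  also have "\<dots> \<le> sqrt (real CARD('d) * 2 ^ CARD('d)) * L powr ((real CARD('d) - 1) / 2) * (eps0 * cE * \<beta>)"
    unfolding bb_def using epos cE0 b0 by (intro mult_left_mono mult_right_mono) auto
  finally show ?thesis unfolding r_def cE_def by (simp add: algebra_simps)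
qed


lemma x_le_powr:
  fixes L x :: real
  assumes L: "L \<ge> 3" and x: "x \<ge> 0"
  shows "x \<le> L powr x"
proof -
  have "exp 1 \<le> L" using exp_le L by linarith
  then have l1: "1 \<le> ln L" using L ln_ge_iff[of L 1] by simp
  have "x = x * 1" by simp
  also have "\<dots> \<le> x * ln L" by (rule mult_left_mono[OF l1 x])
  also have "\<dots> \<le> 1 + x * ln L" by simp
  also have "\<dots> \<le> exp (x * ln L)" by (rule exp_ge_add_one_self)
  also have "\<dots> = L powr x" using L by (simp add: powr_def)
  finally show ?thesis .
qed

theorem lemma2p2:
  fixes eps0 :: real
  assumes "eps0 > 0"
  shows "\<exists>C::real. \<forall>(eps::real) (V :: ('d::finite) pt \<Rightarrow> real) (\<Theta> :: 'd pt set) (L::real) (a :: 'd \<Rightarrow> real)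
      (\<phi> :: 'd pt \<Rightarrow> complex) (lam::real).
    0 < eps \<and> eps \<le> eps0 \<and> bounded (range V) \<and> box L a \<subseteq> \<Theta> \<and> L \<ge> 200 \<and>
    (\<forall>y. y \<notin> box L a \<longrightarrow> \<phi> y = 0) \<and> l2norm \<phi> = 1 \<and>
    Hrestr eps V (box L a) \<phi> = (\<lambda>y. complex_of_real lam * \<phi> y)
    \<longrightarrow>
    (\<forall>\<theta> x. \<theta> > 0 \<and> x \<in> interior_pts (box L a) \<Theta> (real_of_int (Lprime L)) \<and> poly_loc L a x \<theta> \<phi> \<longrightarrow>
        infdist (complex_of_real lam) (spec eps V \<Theta>)
          \<le> l2norm (\<lambda>y. Hrestr eps V \<Theta> \<phi> y - complex_of_real lam * \<phi> y) \<and>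
        l2norm (\<lambda>y. Hrestr eps V \<Theta> \<phi> y - complex_of_real lam * \<phi> y)
          \<le> C * L powr (- (\<theta> - (real CARD('d) - 1) / 2))) \<and>
    (\<forall>s x. 0 < s \<and> s < 1 \<and> x \<in> interior_pts (box L a) \<Theta> (real_of_int (Lprime L)) \<and> subexp_loc L a x s \<phi> \<longrightarrow>
        infdist (complex_of_real lam) (spec eps V \<Theta>)
          \<le> l2norm (\<lambda>y. Hrestr eps V \<Theta> \<phi> y - complex_of_real lam * \<phi> y) \<and>
        (\<exists>c1. c1 \<ge> 1 - C * ln L / L powr s \<and>
          l2norm (\<lambda>y. Hrestr eps V \<Theta> \<phi> y - complex_of_real lam * \<phi> y) \<le> exp (- c1 * L powr s))) \<and>
    (\<forall>m \<tau> x. m > 0 \<and> 0 < \<tau> \<and> \<tau> < 1 \<and> x \<in> interior_pts (box L a) \<Theta> (real_of_int (Ltau L \<tau>)) \<and>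
        exp_loc L a \<tau> x m \<phi> \<longrightarrow>
        infdist (complex_of_real lam) (spec eps V \<Theta>)
          \<le> l2norm (\<lambda>y. Hrestr eps V \<Theta> \<phi> y - complex_of_real lam * \<phi> y) \<and>
        (\<exists>m1. m1 \<ge> m - C * ln L / real_of_int (Ltau L \<tau>) \<and>
          l2norm (\<lambda>y. Hrestr eps V \<Theta> \<phi> y - complex_of_real lam * \<phi> y)
            \<le> exp (- m1 * real_of_int (Ltau L \<tau>))))"
proof -
  define cE where "cE = real (card (Edir :: ('d \<Rightarrow> int) set))"
  define K1 where "K1 = eps0 * cE * sqrt (real CARD('d) * 2 ^ CARD('d))"
  define dd where "dd = (real CARD('d) - 1) / 2"
  define C where "C = K1 + dd"
  have K10: "K1 \<ge> 0" unfolding K1_def cE_def using assms by simp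
  have "real CARD('d) \<ge> 1" using zero_less_card_finite[where 'a='d] by linarith
  then have dd0: "dd \<ge> 0" unfolding dd_def by simp
  show ?thesis
  proof (rule exI[of _ C], intro allI impI)
    fix eps :: real and V :: "'d pt \<Rightarrow> real" and \<Theta> :: "'d pt set" and L :: real and a :: "'d \<Rightarrow> real"
      and \<phi> :: "'d pt \<Rightarrow> complex" and lam :: real
    assume H: "0 < eps \<and> eps \<le> eps0 \<and> bounded (range V) \<and> box L a \<subseteq> \<Theta> \<and> L \<ge> 200 \<and>
      (\<forall>y. y \<notin> box L a \<longrightarrow> \<phi> y = 0) \<and> l2norm \<phi> = 1 \<and>
      Hrestr eps V (box L a) \<phi> = (\<lambda>y. complex_of_real lam * \<phi> y)"
    then have e1: "0 < eps" and e2: "eps \<le> eps0" and bd: "bounded (range V)" and sub: "box L a \<subseteq> \<Theta>"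
      and L200: "L \<ge> 200" and supp: "\<forall>y. y \<notin> box L a \<longrightarrow> \<phi> y = 0" and n1: "l2norm \<phi> = 1"
      and eig: "Hrestr eps V (box L a) \<phi> = (\<lambda>y. complex_of_real lam * \<phi> y)" by blast+
    have L3: "L \<ge> 3" using L200 by simp
    have Lp: "L > 0" using L200 by simp
    define R where "R = l2norm (\<lambda>y. Hrestr eps V \<Theta> \<phi> y - complex_of_real lam * \<phi> y)"
    define Pd where "Pd = L powr dd"
    have Pd0: "Pd \<ge> 0" unfolding Pd_def by simp
    have SP: "infdist (complex_of_real lam) (spec eps V \<Theta>) \<le> R"
      unfolding R_def by (rule spec_bound[OF bd _ n1]) (use supp sub in blast)
    have RB: "R \<le> K1 * Pd * \<beta>"
      if "x \<in> interior_pts (box L a) \<Theta> (real_of_int t)"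
        "\<forall>z\<in>box L a. supnorm (z - x) \<ge> t \<longrightarrow> cmod (\<phi> z) \<le> \<beta>" "\<beta> \<ge> 0" for x t \<beta>
      using resid_bound[OF e1 e2 sub L3 supp eig that] unfolding R_def K1_def cE_def Pd_def dd_def
      by (simp add: algebra_simps)
    have KP: "K1 * Pd \<le> L powr C"
    proof -
      have "K1 * Pd \<le> L powr K1 * Pd" using x_le_powr[OF L3 K10] Pd0 by (rule mult_right_mono)
      also have "\<dots> = L powr C" unfolding C_def Pd_def by (simp add: powr_add)
      finally show ?thesis .
    qed
    have expC: "exp (- (v - C * ln L)) = exp (- v) * L powr C" for v
    proof -
      have "exp (- (v - C * ln L)) = exp (- v) * exp (C * ln L)" by (simp add: exp_add[symmetric])
      also have "exp (C * ln L) = L powr C" using Lp by (simp add: powr_def)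
      finally show ?thesis .
    qed
    have P1: "\<forall>\<theta> x. \<theta> > 0 \<and> x \<in> interior_pts (box L a) \<Theta> (real_of_int (Lprime L)) \<and> poly_loc L a x \<theta> \<phi> \<longrightarrow>
        infdist (complex_of_real lam) (spec eps V \<Theta>) \<le> R \<and>
        R \<le> C * L powr (- (\<theta> - (real CARD('d) - 1) / 2))"
    proof (intro allI impI conjI)
      fix \<theta> x assume A: "\<theta> > 0 \<and> x \<in> interior_pts (box L a) \<Theta> (real_of_int (Lprime L)) \<and> poly_loc L a x \<theta> \<phi>"
      show "infdist (complex_of_real lam) (spec eps V \<Theta>) \<le> R" by (rule SP)
      have "R \<le> K1 * Pd * L powr (- \<theta>)"
        by (rule RB[of x "Lprime L"]) (use A in \<open>auto simp: poly_loc_def\<close>)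
      also have "\<dots> = K1 * L powr (- (\<theta> - (real CARD('d) - 1) / 2))"
        unfolding Pd_def dd_def by (simp add: powr_add[symmetric] algebra_simps)
      also have "\<dots> \<le> C * L powr (- (\<theta> - (real CARD('d) - 1) / 2))"
        unfolding C_def using dd0 by (intro mult_right_mono) auto
      finally show "R \<le> C * L powr (- (\<theta> - (real CARD('d) - 1) / 2))" .
    qed
    have P2: "\<forall>s x. 0 < s \<and> s < 1 \<and> x \<in> interior_pts (box L a) \<Theta> (real_of_int (Lprime L)) \<and> subexp_loc L a x s \<phi> \<longrightarrow>
        infdist (complex_of_real lam) (spec eps V \<Theta>) \<le> R \<and>
        (\<exists>c1. c1 \<ge> 1 - C * ln L / L powr s \<and> R \<le> exp (- c1 * L powr s))"
    proof (intro allI impI conjI)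
      fix s x assume A: "0 < s \<and> s < 1 \<and> x \<in> interior_pts (box L a) \<Theta> (real_of_int (Lprime L)) \<and> subexp_loc L a x s \<phi>"
      show "infdist (complex_of_real lam) (spec eps V \<Theta>) \<le> R" by (rule SP)
      have Ls: "L powr s > 0" using Lp by simp
      have "R \<le> K1 * Pd * exp (- (L powr s))"
        by (rule RB[of x "Lprime L"]) (use A in \<open>auto simp: subexp_loc_def\<close>)
      also have "\<dots> \<le> L powr C * exp (- (L powr s))" using KP by (intro mult_right_mono) auto
      also have "\<dots> = exp (- (1 - C * ln L / L powr s) * L powr s)"
        using expC[of "L powr s"] Ls by (simp add: algebra_simps)
      finally show "\<exists>c1. c1 \<ge> 1 - C * ln L / L powr s \<and> R \<le> exp (- c1 * L powr s)" by blast
    qed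
    have P3: "\<forall>m \<tau> x. m > 0 \<and> 0 < \<tau> \<and> \<tau> < 1 \<and> x \<in> interior_pts (box L a) \<Theta> (real_of_int (Ltau L \<tau>)) \<and>
        exp_loc L a \<tau> x m \<phi> \<longrightarrow>
        infdist (complex_of_real lam) (spec eps V \<Theta>) \<le> R \<and>
        (\<exists>m1. m1 \<ge> m - C * ln L / real_of_int (Ltau L \<tau>) \<and> R \<le> exp (- m1 * real_of_int (Ltau L \<tau>)))"
    proof (intro allI impI conjI)
      fix m \<tau> x assume A: "m > 0 \<and> 0 < \<tau> \<and> \<tau> < 1 \<and> x \<in> interior_pts (box L a) \<Theta> (real_of_int (Ltau L \<tau>)) \<and>
        exp_loc L a \<tau> x m \<phi>"
      show "infdist (complex_of_real lam) (spec eps V \<Theta>) \<le> R" by (rule SP)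
      define T where "T = real_of_int (Ltau L \<tau>)"
      have "1 \<le> L powr \<tau>" using L200 A by (intro ge_one_powr_ge_zero) auto
      then have T1: "T \<ge> 1" unfolding T_def Ltau_def by simp
      have loc: "\<forall>z\<in>box L a. supnorm (z - x) \<ge> Ltau L \<tau> \<longrightarrow> cmod (\<phi> z) \<le> exp (- m * T)"
      proof (intro ballI impI)
        fix z assume z: "z \<in> box L a" "supnorm (z - x) \<ge> Ltau L \<tau>"
        then have "cmod (\<phi> z) \<le> exp (- m * real_of_int (supnorm (z - x)))" using A unfolding exp_loc_def by blast
        also have "\<dots> \<le> exp (- m * T)" unfolding T_def using z(2) A by (simp add: mult_left_mono)
        finally show "cmod (\<phi> z) \<le> exp (- m * T)" .
      qed
      have "R \<le> K1 * Pd * exp (- m * T)"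
        by (rule RB[of x "Ltau L \<tau>"]) (use A loc in auto)
      also have "\<dots> \<le> L powr C * exp (- m * T)" using KP by (intro mult_right_mono) auto
      also have "\<dots> = exp (- (m - C * ln L / T) * T)"
        using expC[of "m * T"] T1 by (simp add: algebra_simps)
      finally show "\<exists>m1. m1 \<ge> m - C * ln L / real_of_int (Ltau L \<tau>) \<and> R \<le> exp (- m1 * real_of_int (Ltau L \<tau>))"
        unfolding T_def by blast
    qed
    show "(\<forall>\<theta> x. \<theta> > 0 \<and> x \<in> interior_pts (box L a) \<Theta> (real_of_int (Lprime L)) \<and> poly_loc L a x \<theta> \<phi> \<longrightarrow>
        infdist (complex_of_real lam) (spec eps V \<Theta>)
          \<le> l2norm (\<lambda>y. Hrestr eps V \<Theta> \<phi> y - complex_of_real lam * \<phi> y) \<and>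
        l2norm (\<lambda>y. Hrestr eps V \<Theta> \<phi> y - complex_of_real lam * \<phi> y)
          \<le> C * L powr (- (\<theta> - (real CARD('d) - 1) / 2))) \<and>
    (\<forall>s x. 0 < s \<and> s < 1 \<and> x \<in> interior_pts (box L a) \<Theta> (real_of_int (Lprime L)) \<and> subexp_loc L a x s \<phi> \<longrightarrow>
        infdist (complex_of_real lam) (spec eps V \<Theta>)
          \<le> l2norm (\<lambda>y. Hrestr eps V \<Theta> \<phi> y - complex_of_real lam * \<phi> y) \<and>
        (\<exists>c1. c1 \<ge> 1 - C * ln L / L powr s \<and>
          l2norm (\<lambda>y. Hrestr eps V \<Theta> \<phi> y - complex_of_real lam * \<phi> y) \<le> exp (- c1 * L powr s))) \<and>
    (\<forall>m \<tau> x. m > 0 \<and> 0 < \<tau> \<and> \<tau> < 1 \<and> x \<in> interior_pts (box L a) \<Theta> (real_of_int (Ltau L \<tau>)) \<and>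
        exp_loc L a \<tau> x m \<phi> \<longrightarrow>
        infdist (complex_of_real lam) (spec eps V \<Theta>)
          \<le> l2norm (\<lambda>y. Hrestr eps V \<Theta> \<phi> y - complex_of_real lam * \<phi> y) \<and>
        (\<exists>m1. m1 \<ge> m - C * ln L / real_of_int (Ltau L \<tau>) \<and>
          l2norm (\<lambda>y. Hrestr eps V \<Theta> \<phi> y - complex_of_real lam * \<phi> y)
            \<le> exp (- m1 * real_of_int (Ltau L \<tau>))))"
      using P1 P2 P3 unfolding R_def by blast
  qed
qed


end
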